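(* Let $X_1,X_2,\ldots$ be i.i.d. with mean $0$ and variance $1$, $Z_1,Z_2,\ldots$ i.i.d. $N(0,1)$ independent of the $X$'s, and let $G_n\in\mathscr G_n$ with $|E(G_n)|\to\infty$ satisfy the $\Sigma$-co-degree condition for an infinite matrix $\Sigma=((\sigma_{st}))_{s,t\ge1}$. Fix $M$ large enough that $b_M>0$ and let $\bm X_{\infty,M}=(X_{1,M},X_{2,M},\ldots)^\top$. Then, as $n\to\infty$ followed by $K_1,K_2\to\infty$, $U_{13,n,M}\to Q_{1,M}$ in distribution and in all moments, where $Q_{1,M}\sim N(0,\bm X_{\infty,M}^\top\Sigma\bm X_{\infty,M})$. Furthermore, the moment generating function of $Q_{1,M}$ is finite in an open interval containing $0$.
   Context: $\mathscr G_n$: simple undirected graphs on $\{1,\ldots,n\}$ labeled so that degrees satisfy $d_1\ge\cdots\ge d_n$; $A(G_n)=((a_{u,v}))$ adjacency matrix, $E(G_n)$ edge set. $\Sigma$-co-degree condition: for each fixed $s,t\ge1$, $\lim_{n\to\infty}\frac{1}{|E(G_n)|}\sum_{v=1}^na_{s,v}a_{v,t}=\sigma_{st}$. Truncation: $a_M=\mathbb E[X_1\mathbf 1\{|X_1|\le M\}]$, $b_M=\operatorname{Var}[X_1\mathbf 1\{|X_1|\le M\}]$, $X_{u,M}:=b_M^{-1/2}(X_u\mathbf 1\{|X_u|\le M\}-a_M)$. $\bm X_{\infty,M}^\top\Sigma\bm X_{\infty,M}$ denotes the $L^1$-limit as $K\to\infty$ of $\sum_{1\le s,t\le K}\sigma_{st}X_{s,M}X_{t,M}$.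 For a nonnegative random variable $A$, $N(0,A)$ is the law of $\sqrt A\,W$ with $W\sim N(0,1)$ independent of $A$. For $K_1,K_2\ge1$: $V_1=\{1,\ldots,\lfloor K_1\rfloor\}$, $V_3=\{\lfloor K_2\sqrt{|E(G_n)|}\rfloor+1,\ldots,n\}$, $A_{13}$ is the submatrix of $A(G_n)$ with rows in $V_1$, columns in $V_3$, $\bm X^{(1)}_{n,M}=(X_{u,M})_{u\in V_1}$, $\bm Z^{(3)}_n=(Z_u)_{u\in V_3}$, and $U_{13,n,M}:=\frac{(\bm X^{(1)}_{n,M})^\top A_{13}\bm Z^{(3)}_n}{\sqrt{|E(G_n)|}}$. *)

theory Defs
  imports "HOL-Probability.Probability"
begin

text \<open>Vertices are 1,...,n. adj n u v means that u and v are adjacent in G_n.\<close>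

definition simple_graph_on :: "nat \<Rightarrow> (nat \<Rightarrow> nat \<Rightarrow> bool) \<Rightarrow> bool" where
  "simple_graph_on n E \<longleftrightarrow>
     (\<forall>u v. E u v \<longrightarrow> u \<in> {1..n} \<and> v \<in> {1..n}) \<and>
     (\<forall>u v. E u v \<longrightarrow> E v u) \<and> (\<forall>u. \<not> E u u)"

definition degree :: "nat \<Rightarrow> (nat \<Rightarrow> nat \<Rightarrow> bool) \<Rightarrow> nat \<Rightarrow> nat" where
  "degree n E u = card {v \<in> {1..n}. E u v}"

definition in_graph_class :: "nat \<Rightarrow> (nat \<Rightarrow> nat \<Rightarrow> bool) \<Rightarrow> bool" where
  "in_graph_class n E \<longleftrightarrow> simple_graph_on n E \<and>
     (\<forall>u v. 1 \<le> u \<longrightarrow> u \<le> v \<longrightarrow> v \<le> n \<longrightarrow> degree n E v \<le> degree n E u)"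

definition num_edges :: "nat \<Rightarrow> (nat \<Rightarrow> nat \<Rightarrow> bool) \<Rightarrow> nat" where
  "num_edges n E = card {(u, v). u \<in> {1..n} \<and> v \<in> {1..n} \<and> u < v \<and> E u v}"

text \<open>Adjacency matrix entry a_{u,v} (0 outside the vertex set).\<close>
definition adj_entry :: "(nat \<Rightarrow> nat \<Rightarrow> bool) \<Rightarrow> nat \<Rightarrow> nat \<Rightarrow> real" where
  "adj_entry E u v = (if E u v then 1 else 0)"

definition codegree_condition :: "(nat \<Rightarrow> nat \<Rightarrow> nat \<Rightarrow> bool) \<Rightarrow> (nat \<Rightarrow> nat \<Rightarrow> real) \<Rightarrow> bool" where
  "codegree_condition G \<sigma> \<longleftrightarrow>
     (\<forall>s t. 1 \<le> s \<longrightarrow> 1 \<le> t \<longrightarrow>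
        (\<lambda>n. (\<Sum>v\<in>{1..n}. adj_entry (G n) s v * adj_entry (G n) v t) / real (num_edges n (G n)))
          \<longlonglongrightarrow> \<sigma> s t)"

text \<open>Truncation constants a_M, b_M and the truncated standardized variables X_{u,M}.\<close>
definition trunc_mean :: "'a measure \<Rightarrow> ('a \<Rightarrow> real) \<Rightarrow> real \<Rightarrow> real" where
  "trunc_mean P Y M = prob_space.expectation P (\<lambda>\<omega>. Y \<omega> * indicator {x. \<bar>x\<bar> \<le> M} (Y \<omega>))"

definition trunc_var :: "'a measure \<Rightarrow> ('a \<Rightarrow> real) \<Rightarrow> real \<Rightarrow> real" where
  "trunc_var P Y M = prob_space.variance P (\<lambda>\<omega>. Y \<omega> * indicator {x. \<bar>x\<bar> \<le> M} (Y \<omega>))"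

definition XM :: "'a measure \<Rightarrow> (nat \<Rightarrow> 'a \<Rightarrow> real) \<Rightarrow> real \<Rightarrow> nat \<Rightarrow> 'a \<Rightarrow> real" where
  "XM P X M u \<omega> = (X u \<omega> * indicator {x. \<bar>x\<bar> \<le> M} (X u \<omega>) - trunc_mean P (X 1) M)
                     / sqrt (trunc_var P (X 1) M)"

definition U13 :: "'a measure \<Rightarrow> (nat \<Rightarrow> 'a \<Rightarrow> real) \<Rightarrow> (nat \<Rightarrow> 'a \<Rightarrow> real) \<Rightarrow>
    (nat \<Rightarrow> nat \<Rightarrow> nat \<Rightarrow> bool) \<Rightarrow> real \<Rightarrow> nat \<Rightarrow> real \<Rightarrow> real \<Rightarrow> 'a \<Rightarrow> real" where
  "U13 P X Z G M n K1 K2 \<omega> =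
     (\<Sum>u\<in>{1..nat \<lfloor>K1\<rfloor>}. \<Sum>v\<in>{nat \<lfloor>K2 * sqrt (real (num_edges n (G n)))\<rfloor> + 1..n}.
        XM P X M u \<omega> * adj_entry (G n) u v * Z v \<omega>) / sqrt (real (num_edges n (G n)))"

definition L1_quad_limit :: "'a measure \<Rightarrow> (nat \<Rightarrow> 'a \<Rightarrow> real) \<Rightarrow> (nat \<Rightarrow> nat \<Rightarrow> real) \<Rightarrow> real \<Rightarrow> ('a \<Rightarrow> real) \<Rightarrow> bool" where
  "L1_quad_limit P X \<sigma> M T \<longleftrightarrow> integrable P T \<and>
     (\<lambda>K. \<integral>\<omega>. \<bar>(\<Sum>s\<in>{1..K}. \<Sum>t\<in>{1..K}. \<sigma> s t * XM P X M s \<omega> * XM P X M t \<omega>) - T \<omega>\<bar> \<partial>P)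
       \<longlonglongrightarrow> 0"

text \<open>Standard normal law and the mixture N(0,A): the law of sqrt(A) W, W ~ N(0,1) independent of A.\<close>
definition std_normal_measure :: "real measure" where
  "std_normal_measure = density lborel std_normal_density"

definition normal_mixture :: "'a measure \<Rightarrow> ('a \<Rightarrow> real) \<Rightarrow> real measure" where
  "normal_mixture P A = distr (P \<Otimes>\<^sub>M std_normal_measure) borel (\<lambda>(\<omega>, w). sqrt (A \<omega>) * w)"

end

theory Submission
  imports Defs
begin

lemma (in prob_space) indep_vars_reindex:
  assumes "indep_vars M' X (f ` I)" "inj_on f I"
  shows "indep_vars (\<lambda>i. M' (f i)) (\<lambda>i. X (f i)) I"
proof -
  have rv: "\<forall>i\<in>I. random_variable (M' (f i)) (X (f i))"
    using assms(1) unfolding indep_vars_def by auto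
  have ind: "indep_sets (\<lambda>i. sigma_sets (space M) {X i -` A \<inter> space M |A. A \<in> sets (M' i)}) (f ` I)"
    using assms(1) unfolding indep_vars_def by auto
  have "indep_sets (\<lambda>i. sigma_sets (space M) {X (f i) -` A \<inter> space M |A. A \<in> sets (M' (f i))}) I"
    unfolding indep_sets_def
  proof (intro conjI ballI allI impI)
    fix i assume "i \<in> I"
    then show "sigma_sets (space M) {X (f i) -` A \<inter> space M |A. A \<in> sets (M' (f i))} \<subseteq> events" using ind unfolding indep_sets_def by auto
  next
    fix J A assume J: "J \<subseteq> I" "J \<noteq> {}" "finite J"
      and A: "A \<in> (\<Pi> j\<in>J. sigma_sets (space M) {X (f j) -` A \<inter> space M |A. A \<in> sets (M' (f j))})"
    define A' where "A' = (\<lambda>j. A (the_inv_into J f j))"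
    have inj: "inj_on f J" using assms(2) J(1) inj_on_subset by blast
    have A'f: "A' (f j) = A j" if "j \<in> J" for j
      unfolding A'_def using the_inv_into_f_f[OF inj that] by simp
    have "A' \<in> (\<Pi> j\<in>f ` J. sigma_sets (space M) {X j -` A \<inter> space M |A. A \<in> sets (M' j)})"
      using A A'f by auto
    have "prob (\<Inter>j\<in>f ` J. A' j) = (\<Prod>j\<in>f ` J. prob (A' j))"
    proof -
      have "f ` J \<subseteq> f ` I" "f ` J \<noteq> {}" "finite (f ` J)" using J by auto
      with ind \<open>A' \<in> _\<close> show ?thesis unfolding indep_sets_def by blast
    qed
    moreover have "(\<Inter>j\<in>f ` J. A' j) = (\<Inter>j\<in>J. A j)" using A'f by auto
    moreover have "(\<Prod>j\<in>f ` J. prob (A' j)) = (\<Prod>j\<in>J. prob (A j))"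
      using A'f inj by (simp add: prod.reindex)
    ultimately show "prob (\<Inter>j\<in>J. A j) = (\<Prod>j\<in>J. prob (A j))" by (metis (no_types, lifting))
  qed
  then show ?thesis using rv unfolding indep_vars_def by auto
qed

locale setting =
  fixes P :: "'a measure"
    and X Z :: "nat \<Rightarrow> 'a \<Rightarrow> real"
    and G :: "nat \<Rightarrow> nat \<Rightarrow> nat \<Rightarrow> bool"
    and \<sigma> :: "nat \<Rightarrow> nat \<Rightarrow> real"
    and M :: real
  assumes P: "prob_space P"
    and meas_X: "\<And>i. X i \<in> borel_measurable P"
    and meas_Z: "\<And>i. Z i \<in> borel_measurable P"
    and indep: "prob_space.indep_vars P (\<lambda>_. borel) (case_sum X Z) ({1..} <+> {1..})"
    and ident: "\<And>i. 1 \<le> i \<Longrightarrow> distr P borel (X i) = distr P borel (X 1)"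
    and normal_Z: "\<And>i. 1 \<le> i \<Longrightarrow> distributed P lborel (Z i) std_normal_density"
    and graphs: "\<And>n. in_graph_class n (G n)"
    and edges: "filterlim (\<lambda>n. real (num_edges n (G n))) at_top sequentially"
    and codeg: "codegree_condition G \<sigma>"
    and bM: "trunc_var P (X 1) M > 0"

sublocale setting \<subseteq> prob_space P by (rule P)

context setting
begin

declare meas_X[measurable] meas_Z[measurable]

definition "am = trunc_mean P (X 1) M"
definition "bm = trunc_var P (X 1) M"
definition "tr r = r * indicator {x. \<bar>x\<bar> \<le> M} r"
definition "yf r = (tr r - am) / sqrt bm"
definition "Y u = XM P X M u"
definition "B = (\<bar>M\<bar> + \<bar>am\<bar>) / sqrt bm"

lemma bm_pos: "bm > 0" using bM by (simp add: bm_def)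

lemma tr_meas[measurable]: "tr \<in> borel_measurable borel"
  unfolding tr_def by measurable

lemma yf_meas[measurable]: "yf \<in> borel_measurable borel"
  unfolding yf_def by measurable

lemma Y_eq: "Y u \<omega> = yf (X u \<omega>)"
  by (simp add: Y_def XM_def yf_def tr_def am_def bm_def)

lemma Y_fun: "Y u = (\<lambda>\<omega>. yf (X u \<omega>))"
  using Y_eq by auto

lemma Y_meas[measurable]: "Y u \<in> borel_measurable P"
  unfolding Y_fun by measurable

lemma tr_bound: "\<bar>tr r\<bar> \<le> \<bar>M\<bar>"
  by (auto simp: tr_def indicator_def)

lemma yf_bound: "\<bar>yf r\<bar> \<le> B"
proof -
  have "\<bar>tr r - am\<bar> \<le> \<bar>M\<bar> + \<bar>am\<bar>" using tr_bound[of r] by linarith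
  then show ?thesis using bm_pos unfolding yf_def B_def
    by (simp add: abs_div divide_right_mono)
qed

lemma B_nonneg: "B \<ge> 0" using bm_pos by (simp add: B_def)

lemma Y_bound: "\<bar>Y u \<omega>\<bar> \<le> B"
  using yf_bound Y_eq by simp

lemma E_ident:
  fixes g :: "real \<Rightarrow> real"
  assumes "1 \<le> u" and [measurable]: "g \<in> borel_measurable borel"
  shows "expectation (\<lambda>\<omega>. g (X u \<omega>)) = expectation (\<lambda>\<omega>. g (X 1 \<omega>))"
proof -
  have "expectation (\<lambda>\<omega>. g (X u \<omega>)) = integral\<^sup>L (distr P borel (X u)) g"
    by (rule integral_distr[symmetric]) auto
  also have "\<dots> = integral\<^sup>L (distr P borel (X 1)) g" using ident[OF assms(1)] by simp
  also have "\<dots> = expectation (\<lambda>\<omega>. g (X 1 \<omega>))" by (rule integral_distr) auto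
  finally show ?thesis .
qed

lemma integrable_bounded:
  fixes f :: "'a \<Rightarrow> real"
  assumes [measurable]: "f \<in> borel_measurable P" and "\<And>\<omega>. \<bar>f \<omega>\<bar> \<le> C"
  shows "integrable P f"
  by (rule integrable_const_bound[where B=C]) (use assms in auto)

lemma tr_int: "integrable P (\<lambda>\<omega>. tr (X u \<omega>))"
  by (rule integrable_bounded[where C="\<bar>M\<bar>"]) (auto intro: tr_bound)

lemma am_eq: "am = expectation (\<lambda>\<omega>. tr (X 1 \<omega>))"
  by (simp add: am_def trunc_mean_def tr_def)

lemma bm_eq: "bm = expectation (\<lambda>\<omega>. (tr (X 1 \<omega>) - am)\<^sup>2)"
  by (simp add: bm_def trunc_var_def tr_def am_eq)

lemma Y_int: "integrable P (Y u)"
  by (rule integrable_bounded[where C=B]) (auto intro: Y_bound)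

lemma Y_mean: assumes "1 \<le> u" shows "expectation (Y u) = 0"
proof -
  have "expectation (Y u) = expectation (\<lambda>\<omega>. yf (X 1 \<omega>))"
    unfolding Y_fun by (rule E_ident[OF assms]) simp
  also have "\<dots> = expectation (\<lambda>\<omega>. (tr (X 1 \<omega>) - am) / sqrt bm)"
    by (simp add: yf_def)
  also have "\<dots> = (expectation (\<lambda>\<omega>. tr (X 1 \<omega>)) - am) / sqrt bm"
    using tr_int by (simp add: Bochner_Integration.integral_diff prob_space)
  also have "\<dots> = 0" by (simp add: am_eq)
  finally show ?thesis .
qed

lemma Y_sq: assumes "1 \<le> u" shows "expectation (\<lambda>\<omega>. (Y u \<omega>)\<^sup>2) = 1"
proof -
  have "expectation (\<lambda>\<omega>. (Y u \<omega>)\<^sup>2) = expectation (\<lambda>\<omega>. (yf (X 1 \<omega>))\<^sup>2)"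
    unfolding Y_fun by (rule E_ident[OF assms]) simp
  also have "\<dots> = expectation (\<lambda>\<omega>. (tr (X 1 \<omega>) - am)\<^sup>2 / bm)"
    using bm_pos by (simp add: yf_def power_divide)
  also have "\<dots> = bm / bm" by (simp add: bm_eq)
  also have "\<dots> = 1" using bm_pos by simp
  finally show ?thesis .
qed

lemma indep_X: "indep_vars (\<lambda>_. borel) X {1..}"
proof -
  have "indep_vars (\<lambda>_. borel) (case_sum X Z) (Inl ` {1..})"
    by (rule indep_vars_subset[OF indep]) auto
  from indep_vars_reindex[OF this] show ?thesis by simp
qed

lemma indep_Z: "indep_vars (\<lambda>_. borel) Z {1..}"
proof -
  have "indep_vars (\<lambda>_. borel) (case_sum X Z) (Inr ` {1..})"
    by (rule indep_vars_subset[OF indep]) auto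
  from indep_vars_reindex[OF this] show ?thesis by simp
qed

lemma indep_Y: "indep_vars (\<lambda>_. borel) Y {1..}"
  unfolding Y_fun by (rule indep_vars_compose2[OF indep_X]) simp

lemma E_YY: assumes "1 \<le> u" "1 \<le> v"
  shows "expectation (\<lambda>\<omega>. Y u \<omega> * Y v \<omega>) = (if u = v then 1 else 0)"
proof (cases "u = v")
  case True then show ?thesis using Y_sq[OF assms(1)] by (simp add: power2_eq_square)
next
  case False
  have "expectation (\<lambda>\<omega>. \<Prod>i\<in>{u,v}. Y i \<omega>) = (\<Prod>i\<in>{u,v}. expectation (Y i))"
  proof (rule indep_vars_lebesgue_integral)
    show "indep_vars (\<lambda>_. borel) Y {u, v}"
      by (rule indep_vars_subset[OF indep_Y]) (use assms in auto)
  qed (auto intro: Y_int)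
  then show ?thesis using False Y_mean assms by simp
qed

lemma YY_int: "integrable P (\<lambda>\<omega>. Y u \<omega> * Y v \<omega>)"
proof (rule integrable_bounded[where C="B*B"])
  show "\<bar>Y u \<omega> * Y v \<omega>\<bar> \<le> B * B" for \<omega>
    using Y_bound[of u \<omega>] Y_bound[of v \<omega>] by (simp add: abs_mult mult_mono')
qed simp

lemma E_sum_sq:
  assumes "finite N" "N \<subseteq> {1..}"
  shows "expectation (\<lambda>\<omega>. (\<Sum>u\<in>N. Y u \<omega>)\<^sup>2) = real (card N)"
proof -
  have "expectation (\<lambda>\<omega>. (\<Sum>u\<in>N. Y u \<omega>)\<^sup>2) = expectation (\<lambda>\<omega>. \<Sum>u\<in>N. \<Sum>v\<in>N. Y u \<omega> * Y v \<omega>)"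
    by (simp add: power2_eq_square sum_product)
  also have "\<dots> = (\<Sum>u\<in>N. \<Sum>v\<in>N. expectation (\<lambda>\<omega>. Y u \<omega> * Y v \<omega>))"
    by (simp add: Bochner_Integration.integral_sum Bochner_Integration.integrable_sum YY_int)
  also have "\<dots> = (\<Sum>u\<in>N. \<Sum>v\<in>N. (if u = v then 1 else 0))"
    using assms(2) by (intro sum.cong refl) (auto simp: E_YY subset_eq)
  also have "\<dots> = real (card N)" using assms(1) by simp
  finally show ?thesis .
qed



end

lemma handshake:
  assumes "simple_graph_on n E"
  shows "(\<Sum>u\<in>{1..n}. degree n E u) = 2 * num_edges n E"
proof -
  let ?A = "{(u, v). u \<in> {1..n} \<and> v \<in> {1..n} \<and> E u v}"
  let ?L = "{(u, v). u \<in> {1..n} \<and> v \<in> {1..n} \<and> u < v \<and> E u v}"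
  let ?R = "{(u, v). u \<in> {1..n} \<and> v \<in> {1..n} \<and> v < u \<and> E u v}"
  have sym: "E u v \<Longrightarrow> E v u" and irr: "\<not> E u u" for u v
    using assms unfolding simple_graph_on_def by auto
  have "(\<Sum>u\<in>{1..n}. degree n E u) = (\<Sum>u\<in>{1..n}. card {v \<in> {1..n}. E u v})"
    by (simp add: degree_def)
  also have "\<dots> = card (SIGMA u:{1..n}. {v \<in> {1..n}. E u v})"
    by (rule card_SigmaI[symmetric]) auto
  also have "(SIGMA u:{1..n}. {v \<in> {1..n}. E u v}) = ?A" by auto
  also have "?A = ?L \<union> ?R" using irr by (auto dest: not_less_iff_gr_or_eq[THEN iffD1])
  also have "card (?L \<union> ?R) = card ?L + card ?R"
    by (rule card_Un_disjoint) (auto intro: finite_subset[of _ "{1..n} \<times> {1..n}"])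
  also have "card ?R = card ?L"
  proof -
    have "?R = (\<lambda>(u, v). (v, u)) ` ?L" using sym by (auto simp: image_iff)
    moreover have "inj_on (\<lambda>(u, v). (v, u)) ?L" by (auto simp: inj_on_def)
    ultimately show ?thesis by (simp add: card_image)
  qed
  finally show ?thesis by (simp add: num_edges_def)
qed

context setting
begin

definition "En n = real (num_edges n (G n))"
definition "a n u v = adj_entry (G n) u v"

lemma simple: "simple_graph_on n (G n)"
  using graphs[of n] by (simp add: in_graph_class_def)

lemma a_sym: "a n u v = a n v u"
  using simple[of n] by (auto simp: a_def adj_entry_def simple_graph_on_def)

lemma a_01: "a n u v = 0 \<or> a n u v = 1"
  by (simp add: a_def adj_entry_def)

lemma a_nonneg: "0 \<le> a n u v" and a_le1: "a n u v \<le> 1"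
  by (auto simp: a_def adj_entry_def)

lemma a_sq: "(a n u v)\<^sup>2 = a n u v" "a n u v * a n u v = a n u v"
  using a_01[of n u v] by (auto simp: power2_eq_square)

lemma a_supp: "a n u v \<noteq> 0 \<Longrightarrow> u \<in> {1..n} \<and> v \<in> {1..n}"
  using simple[of n] by (auto simp: a_def adj_entry_def simple_graph_on_def split: if_splits)

definition "d n u = (\<Sum>v\<in>{1..n}. a n u v)"

lemma d_eq: "d n u = real (degree n (G n) u)"
proof -
  have "d n u = (\<Sum>v\<in>{1..n}. if G n u v then 1 else 0)"
    by (simp add: d_def a_def adj_entry_def)
  also have "\<dots> = (\<Sum>v\<in>{v\<in>{1..n}. G n u v}. 1)"
    by (rule sum.inter_filter[symmetric]) simp
  also have "\<dots> = real (degree n (G n) u)" by (simp add: degree_def)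
  finally show ?thesis .
qed

lemma d_nonneg: "0 \<le> d n u" by (simp add: d_eq)

lemma sum_d: "(\<Sum>u\<in>{1..n}. d n u) = 2 * En n"
  using handshake[OF simple[of n]] by (simp add: d_eq En_def flip: of_nat_sum)

lemma d_zero: "u \<notin> {1..n} \<Longrightarrow> d n u = 0"
  unfolding d_def using a_supp by (auto intro: sum.neutral)

lemma sum_d_le: "(\<Sum>u\<in>A. d n u) \<le> 2 * En n" if "finite A"
proof -
  have "(\<Sum>u\<in>A. d n u) = (\<Sum>u\<in>A \<inter> {1..n}. d n u)"
    using that by (intro sum.mono_neutral_right) (auto simp: d_zero)
  also have "\<dots> \<le> (\<Sum>u\<in>{1..n}. d n u)"
    by (intro sum_mono2) (auto simp: d_nonneg)
  also have "\<dots> = 2 * En n" by (rule sum_d)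
  finally show ?thesis .
qed

lemma En_nonneg: "0 \<le> En n" by (simp add: En_def)

lemma En_tendsto: "filterlim En at_top sequentially"
  using edges by (simp add: En_def[abs_def])

lemma codeg': "1 \<le> s \<Longrightarrow> 1 \<le> t \<Longrightarrow>
   (\<lambda>n. (\<Sum>v\<in>{1..n}. a n s v * a n t v) / En n) \<longlonglongrightarrow> \<sigma> s t"
proof -
  assume st: "1 \<le> s" "1 \<le> t"
  have "(\<lambda>n. (\<Sum>v\<in>{1..n}. a n s v * a n v t) / En n) \<longlonglongrightarrow> \<sigma> s t"
    using codeg st unfolding codegree_condition_def by (simp add: a_def[symmetric] En_def[symmetric])
  moreover have "(\<lambda>n. (\<Sum>v\<in>{1..n}. a n s v * a n v t) / En n) = (\<lambda>n. (\<Sum>v\<in>{1..n}. a n s v * a n t v) / En n)"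
    by (intro ext arg_cong2[where f="(/)"] sum.cong refl) (metis a_sym)
  ultimately show ?thesis by simp
qed

lemma sigma_diag: "1 \<le> s \<Longrightarrow> (\<lambda>n. d n s / En n) \<longlonglongrightarrow> \<sigma> s s"
  using codeg'[of s s] by (simp add: a_sq d_def)

lemma sigma_diag_nonneg: "1 \<le> s \<Longrightarrow> 0 \<le> \<sigma> s s"
  by (rule LIMSEQ_le_const[OF sigma_diag]) (auto simp: d_nonneg En_nonneg)

lemma sigma_diag_sum: "finite A \<Longrightarrow> A \<subseteq> {1..} \<Longrightarrow> (\<Sum>s\<in>A. \<sigma> s s) \<le> 2"
proof -
  assume A: "finite A" "A \<subseteq> {1..}"
  have lim: "(\<lambda>n. \<Sum>s\<in>A. d n s / En n) \<longlonglongrightarrow> (\<Sum>s\<in>A. \<sigma> s s)"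
    using A by (intro tendsto_sum sigma_diag) auto
  have "(\<Sum>s\<in>A. d n s / En n) \<le> 2" for n
  proof (cases "En n = 0")
    case False
    then have "En n > 0" using En_nonneg[of n] by simp
    then show ?thesis using sum_d_le[OF A(1), of n]
      by (simp add: sum_divide_distrib[symmetric] divide_le_eq)
  qed simp
  then show ?thesis by (intro LIMSEQ_le_const2[OF lim]) auto
qed

end

context setting
begin

definition "Lf n K v \<omega> = (\<Sum>u\<in>{1..K}. Y u \<omega> * a n u v)"
definition "Vg n K lo \<omega> = (\<Sum>v\<in>{lo..n}. (Lf n K v \<omega>)\<^sup>2) / En n"
definition "S K \<omega> = (\<Sum>s\<in>{1..K}. \<Sum>t\<in>{1..K}. \<sigma> s t * Y s \<omega> * Y t \<omega>)"

lemma Lf_meas[measurable]: "Lf n K v \<in> borel_measurable P"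
  unfolding Lf_def by measurable
lemma Vg_meas[measurable]: "Vg n K lo \<in> borel_measurable P"
  unfolding Vg_def by measurable
lemma S_meas[measurable]: "S K \<in> borel_measurable P"
  unfolding S_def by measurable

lemma Vg_expand:
  "Vg n K lo \<omega> = (\<Sum>s\<in>{1..K}. \<Sum>t\<in>{1..K}. Y s \<omega> * Y t \<omega> * ((\<Sum>v\<in>{lo..n}. a n s v * a n t v) / En n))"
proof -
  have "(\<Sum>v\<in>{lo..n}. (Lf n K v \<omega>)\<^sup>2) =
      (\<Sum>v\<in>{lo..n}. \<Sum>s\<in>{1..K}. \<Sum>t\<in>{1..K}. Y s \<omega> * Y t \<omega> * (a n s v * a n t v))"
    by (simp add: Lf_def power2_eq_square sum_product mult_ac)
  also have "\<dots> = (\<Sum>s\<in>{1..K}. \<Sum>t\<in>{1..K}. \<Sum>v\<in>{lo..n}. Y s \<omega> * Y t \<omega> * (a n s v * a n t v))"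
    by (simp add: sum.swap[of _ "{lo..n}"] sum.swap[of _ "{lo..n}" "{1..K}"])
  finally have eq: "(\<Sum>v\<in>{lo..n}. (Lf n K v \<omega>)\<^sup>2) = (\<Sum>s\<in>{1..K}. \<Sum>t\<in>{1..K}. \<Sum>v\<in>{lo..n}. Y s \<omega> * Y t \<omega> * (a n s v * a n t v))" .
  show ?thesis unfolding Vg_def eq
    by (simp add: sum_divide_distrib sum_distrib_left mult.assoc)
qed

lemma coef_lim:
  assumes lo: "\<And>n. real (lo n) \<le> c * sqrt (En n) + 1" and c: "0 \<le> c"
    and st: "1 \<le> s" "1 \<le> t"
  shows "(\<lambda>n. (\<Sum>v\<in>{lo n..n}. a n s v * a n t v) / En n) \<longlonglongrightarrow> \<sigma> s t"
proof -
  define full where "full n = (\<Sum>v\<in>{1..n}. a n s v * a n t v)" for n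
  define part where "part n = (\<Sum>v\<in>{lo n..n}. a n s v * a n t v)" for n
  have part_eq: "part n = (\<Sum>v\<in>{lo n..n} \<inter> {1..n}. a n s v * a n t v)" for n
    unfolding part_def by (rule sum.mono_neutral_right) (auto dest: a_supp)
  have diff: "0 \<le> full n - part n \<and> full n - part n \<le> c * sqrt (En n)" for n
  proof -
    have "full n - part n = (\<Sum>v\<in>{1..n} - ({lo n..n} \<inter> {1..n}). a n s v * a n t v)"
      unfolding full_def part_eq by (subst sum_diff) auto
    also have "\<dots> \<le> (\<Sum>v\<in>{1..n} - ({lo n..n} \<inter> {1..n}). 1)"
      by (intro sum_mono) (auto intro: mult_le_one a_le1 a_nonneg)
    also have "\<dots> \<le> real (card {1..<lo n})"
    proof -
      have "{1..n} - ({lo n..n} \<inter> {1..n}) \<subseteq> {1..<lo n}" by auto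
      then have "card ({1..n} - ({lo n..n} \<inter> {1..n})) \<le> card {1..<lo n}" by (rule card_mono[rotated]) auto
      then show ?thesis by simp
    qed
    also have "\<dots> \<le> c * sqrt (En n)" using lo[of n] c En_nonneg[of n] by (cases "lo n = 0") (auto simp: of_nat_diff)
    finally have "full n - part n \<le> c * sqrt (En n)" .
    moreover have "0 \<le> full n - part n"
      unfolding \<open>full n - part n = _\<close>
      by (intro sum_nonneg) (auto intro: mult_nonneg_nonneg a_nonneg)
    ultimately show ?thesis by simp
  qed
  have F: "(\<lambda>n. full n / En n) \<longlonglongrightarrow> \<sigma> s t"
    using codeg'[OF st] by (simp add: full_def)
  have sq: "filterlim (\<lambda>n. sqrt (En n)) at_top sequentially"
    by (rule filterlim_compose[OF sqrt_at_top En_tendsto])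
  have Z: "(\<lambda>n. c / sqrt (En n)) \<longlonglongrightarrow> 0"
    by (rule tendsto_divide_0[OF tendsto_const filterlim_at_top_imp_at_infinity[OF sq]])
  have D: "(\<lambda>n. (full n - part n) / En n) \<longlonglongrightarrow> 0"
  proof (rule tendsto_sandwich[OF _ _ tendsto_const Z])
    show "\<forall>\<^sub>F n in sequentially. 0 \<le> (full n - part n) / En n"
      using diff En_nonneg by (auto intro!: always_eventually divide_nonneg_nonneg)
    have "\<forall>\<^sub>F n in sequentially. En n > 0"
      using En_tendsto by (simp add: filterlim_at_top_dense)
    then show "\<forall>\<^sub>F n in sequentially. (full n - part n) / En n \<le> c / sqrt (En n)"
    proof eventually_elim
      case (elim n)
      have "(full n - part n) / En n \<le> c * sqrt (En n) / En n"
        using diff[of n] elim by (simp add: divide_right_mono)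
      also have "\<dots> = c / sqrt (En n)"
        using elim by (simp add: field_simps)
      finally show ?case .
    qed
  qed
  have "(\<lambda>n. full n / En n - (full n - part n) / En n) \<longlonglongrightarrow> \<sigma> s t - 0"
    by (rule tendsto_diff[OF F D])
  then show ?thesis by (simp add: part_def[symmetric] diff_divide_distrib)
qed

lemma Vg_lim:
  assumes lo: "\<And>n. real (lo n) \<le> c * sqrt (En n) + 1" and c: "0 \<le> c"
  shows "(\<lambda>n. Vg n K (lo n) \<omega>) \<longlonglongrightarrow> S K \<omega>"
proof -
  have "S K \<omega> = (\<Sum>s\<in>{1..K}. \<Sum>t\<in>{1..K}. Y s \<omega> * Y t \<omega> * \<sigma> s t)"
    by (simp add: S_def mult_ac)
  then show ?thesis unfolding Vg_expand
    by (simp only:) (intro tendsto_sum tendsto_mult tendsto_const coef_lim[OF lo c], auto)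
qed

lemma Lf_bound1: "\<bar>Lf n K v \<omega>\<bar> \<le> B * (\<Sum>u\<in>{1..K}. a n u v)"
proof -
  have "\<bar>Lf n K v \<omega>\<bar> \<le> (\<Sum>u\<in>{1..K}. \<bar>Y u \<omega> * a n u v\<bar>)" unfolding Lf_def by (rule sum_abs)
  also have "\<dots> \<le> (\<Sum>u\<in>{1..K}. B * a n u v)"
    by (intro sum_mono) (simp add: abs_mult a_nonneg mult_right_mono Y_bound)
  finally show ?thesis by (simp add: sum_distrib_left)
qed

lemma Lf_bound2: "\<bar>Lf n K v \<omega>\<bar> \<le> B * K"
proof -
  have "(\<Sum>u\<in>{1..K}. a n u v) \<le> (\<Sum>u\<in>{1..K}. 1)" by (intro sum_mono a_le1)
  then show ?thesis using Lf_bound1[of n K v \<omega>] B_nonneg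
    by (simp add: order_trans mult_left_mono)
qed

lemma sum_a_le_d: "(\<Sum>v\<in>{lo..n}. a n u v) \<le> d n u"
proof -
  have "(\<Sum>v\<in>{lo..n}. a n u v) = (\<Sum>v\<in>{lo..n} \<inter> {1..n}. a n u v)"
  proof -
    have z: "\<forall>v. v \<notin> {1..n} \<longrightarrow> a n u v = 0" using a_supp by blast
    show ?thesis by (rule sum.mono_neutral_right) (use z in auto)
  qed
  also have "\<dots> \<le> (\<Sum>v\<in>{1..n}. a n u v)" by (intro sum_mono2) (auto simp: a_nonneg)
  finally show ?thesis by (simp add: d_def)
qed

lemma Vg_nonneg: "0 \<le> Vg n K lo \<omega>"
  unfolding Vg_def by (simp add: En_nonneg sum_nonneg)

lemma Vg_bound: "Vg n K lo \<omega> \<le> 2 * K * B\<^sup>2"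
proof (cases "En n = 0")
  case True then show ?thesis by (simp add: Vg_def)
next
  case False
  then have E: "En n > 0" using En_nonneg[of n] by simp
  have "(\<Sum>v\<in>{lo..n}. (Lf n K v \<omega>)\<^sup>2) \<le> (\<Sum>v\<in>{lo..n}. (B * K) * (B * (\<Sum>u\<in>{1..K}. a n u v)))"
  proof (intro sum_mono)
    fix v
    have "(Lf n K v \<omega>)\<^sup>2 = \<bar>Lf n K v \<omega>\<bar> * \<bar>Lf n K v \<omega>\<bar>" by (simp add: power2_eq_square)
    also have "\<dots> \<le> (B * K) * (B * (\<Sum>u\<in>{1..K}. a n u v))"
      by (rule mult_mono[OF Lf_bound2 Lf_bound1]) (auto simp: B_nonneg)
    finally show "(Lf n K v \<omega>)\<^sup>2 \<le> (B * K) * (B * (\<Sum>u\<in>{1..K}. a n u v))" .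
  qed
  also have "\<dots> = B\<^sup>2 * K * (\<Sum>u\<in>{1..K}. \<Sum>v\<in>{lo..n}. a n u v)"
    by (simp add: sum_distrib_left[symmetric] sum.swap[of _ "{lo..n}"] power2_eq_square mult_ac)
  also have "\<dots> \<le> B\<^sup>2 * K * (\<Sum>u\<in>{1..K}. d n u)"
    by (intro mult_left_mono sum_mono sum_a_le_d) auto
  also have "\<dots> \<le> B\<^sup>2 * K * (2 * En n)"
    by (intro mult_left_mono sum_d_le) auto
  finally show ?thesis using E by (simp add: Vg_def divide_le_eq mult_ac)
qed

lemma S_lim: "(\<lambda>n. Vg n K 1 \<omega>) \<longlonglongrightarrow> S K \<omega>"
  by (rule Vg_lim[where c=0]) auto

lemma S_nonneg: "0 \<le> S K \<omega>"
  by (rule LIMSEQ_le_const[OF S_lim]) (auto intro: Vg_nonneg)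

lemma S_bound: "S K \<omega> \<le> 2 * K * B\<^sup>2"
  by (rule LIMSEQ_le_const2[OF S_lim]) (auto intro: Vg_bound)

lemma S_int: "integrable P (S K)"
  by (rule integrable_bounded[where C="2 * K * B\<^sup>2"]) (use S_nonneg S_bound in auto)

end

context setting
begin

lemma E_lin_sq:
  assumes "finite A" "A \<subseteq> {1..}"
  shows "expectation (\<lambda>\<omega>. (\<Sum>u\<in>A. c u * Y u \<omega>)\<^sup>2) = (\<Sum>u\<in>A. (c u)\<^sup>2)"
proof -
  have "expectation (\<lambda>\<omega>. (\<Sum>u\<in>A. c u * Y u \<omega>)\<^sup>2) = expectation (\<lambda>\<omega>. \<Sum>u\<in>A. \<Sum>v\<in>A. c u * c v * (Y u \<omega> * Y v \<omega>))"
    by (simp add: power2_eq_square sum_product mult_ac)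
  also have "\<dots> = (\<Sum>u\<in>A. \<Sum>v\<in>A. c u * c v * expectation (\<lambda>\<omega>. Y u \<omega> * Y v \<omega>))"
    by (simp add: Bochner_Integration.integral_sum Bochner_Integration.integrable_sum YY_int)
  also have "\<dots> = (\<Sum>u\<in>A. \<Sum>v\<in>A. c u * c v * (if u = v then 1 else 0))"
    using assms(2) by (intro sum.cong refl) (auto simp: E_YY subset_eq)
  also have "\<dots> = (\<Sum>u\<in>A. (c u)\<^sup>2)" using assms(1) by (simp add: power2_eq_square if_distrib cong: if_cong)
  finally show ?thesis .
qed

definition "R n J K v \<omega> = (\<Sum>u\<in>{J<..K}. Y u \<omega> * a n u v)"

lemma R_meas[measurable]: "R n J K v \<in> borel_measurable P"
  unfolding R_def by measurable

lemma Lf_split: "J \<le> K \<Longrightarrow> Lf n K v \<omega> = Lf n J v \<omega> + R n J K v \<omega>"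
proof -
  assume "J \<le> K"
  then have "{1..K} = {1..J} \<union> {J<..K}" by auto
  then show ?thesis unfolding Lf_def R_def
    by (simp add: sum.union_disjoint ivl_disj_int)
qed

lemma sq_ineq:
  fixes L R e :: real assumes "e > 0"
  shows "\<bar>(L + R)\<^sup>2 - L\<^sup>2\<bar> \<le> e * L\<^sup>2 + (1 + 1/e) * R\<^sup>2"
proof -
  have "0 \<le> (e * \<bar>L\<bar> - \<bar>R\<bar>)\<^sup>2" by simp
  then have "2 * \<bar>L\<bar> * \<bar>R\<bar> * e \<le> e\<^sup>2 * L\<^sup>2 + R\<^sup>2"
    by (simp add: power2_eq_square algebra_simps)
  then have "2 * \<bar>L\<bar> * \<bar>R\<bar> \<le> e * L\<^sup>2 + R\<^sup>2 / e"
    using assms by (simp add: field_simps power2_eq_square)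
  moreover have "\<bar>(L + R)\<^sup>2 - L\<^sup>2\<bar> \<le> 2 * \<bar>L\<bar> * \<bar>R\<bar> + R\<^sup>2"
  proof -
    have "(L + R)\<^sup>2 - L\<^sup>2 = 2 * L * R + R\<^sup>2" by (simp add: power2_eq_square algebra_simps)
    moreover have "\<bar>2 * L * R + R\<^sup>2\<bar> \<le> \<bar>2 * L * R\<bar> + \<bar>R\<^sup>2\<bar>" by (rule abs_triangle_ineq)
    ultimately show ?thesis by (simp add: abs_mult)
  qed
  ultimately show ?thesis by (simp add: algebra_simps)
qed

lemma Vg_int: "integrable P (\<lambda>\<omega>. Vg n K lo \<omega>)"
  by (rule integrable_bounded[where C="2 * K * B\<^sup>2"]) (use Vg_nonneg Vg_bound in auto)

lemma Lf_sq_int: "integrable P (\<lambda>\<omega>. (Lf n K v \<omega>)\<^sup>2)"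
  by (rule integrable_bounded[where C="(B * K)\<^sup>2"])
     (auto simp: abs_le_square_iff[symmetric] intro: order_trans[OF _ abs_ge_self] Lf_bound2)

lemma R_sq_int: "integrable P (\<lambda>\<omega>. (R n J K v \<omega>)\<^sup>2)"
proof (rule integrable_bounded[where C="(B * K)\<^sup>2"])
  fix \<omega>
  have "\<bar>R n J K v \<omega>\<bar> \<le> (\<Sum>u\<in>{J<..K}. \<bar>Y u \<omega> * a n u v\<bar>)" unfolding R_def by (rule sum_abs)
  also have "\<dots> \<le> (\<Sum>u\<in>{J<..K}. B)"
    by (intro sum_mono) (simp add: abs_mult a_nonneg Y_bound mult_le_one a_le1 B_nonneg order_trans[OF mult_left_mono[OF a_le1]])
  also have "\<dots> \<le> B * K" using B_nonneg by simp (metis mult.commute mult_right_mono of_nat_le_iff diff_le_self)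
  finally have "\<bar>R n J K v \<omega>\<bar> \<le> B * K" .
  then show "\<bar>(R n J K v \<omega>)\<^sup>2\<bar> \<le> (B * K)\<^sup>2"
    by (simp add: abs_le_square_iff[symmetric])
qed simp

lemma E_Lf_sq: "expectation (\<lambda>\<omega>. (Lf n K v \<omega>)\<^sup>2) = (\<Sum>u\<in>{1..K}. a n u v)"
proof -
  have "expectation (\<lambda>\<omega>. (Lf n K v \<omega>)\<^sup>2) = expectation (\<lambda>\<omega>. (\<Sum>u\<in>{1..K}. a n u v * Y u \<omega>)\<^sup>2)"
    by (simp add: Lf_def mult.commute)
  also have "\<dots> = (\<Sum>u\<in>{1..K}. (a n u v)\<^sup>2)" by (rule E_lin_sq) auto
  finally show ?thesis by (simp add: a_sq)
qed

lemma E_R_sq: "expectation (\<lambda>\<omega>. (R n J K v \<omega>)\<^sup>2) = (\<Sum>u\<in>{J<..K}. a n u v)"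
proof -
  have "expectation (\<lambda>\<omega>. (R n J K v \<omega>)\<^sup>2) = expectation (\<lambda>\<omega>. (\<Sum>u\<in>{J<..K}. a n u v * Y u \<omega>)\<^sup>2)"
    by (simp add: R_def mult.commute)
  also have "\<dots> = (\<Sum>u\<in>{J<..K}. (a n u v)\<^sup>2)" by (rule E_lin_sq) auto
  finally show ?thesis by (simp add: a_sq)
qed

lemma diff_n_bound:
  assumes "J \<le> K" "e > 0"
  shows "expectation (\<lambda>\<omega>. \<bar>Vg n K 1 \<omega> - Vg n J 1 \<omega>\<bar>) \<le> 2 * e + (1 + 1/e) * (\<Sum>u\<in>{J<..K}. d n u / En n)"
proof (cases "En n = 0")
  case True then show ?thesis using assms by (simp add: Vg_def sum_nonneg d_nonneg)
next
  case False
  then have E: "En n > 0" using En_nonneg[of n] by simp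
  define F where "F \<omega> = (e * (\<Sum>v\<in>{1..n}. (Lf n J v \<omega>)\<^sup>2) + (1 + 1/e) * (\<Sum>v\<in>{1..n}. (R n J K v \<omega>)\<^sup>2)) / En n" for \<omega>
  have pw: "\<bar>Vg n K 1 \<omega> - Vg n J 1 \<omega>\<bar> \<le> F \<omega>" for \<omega>
  proof -
    have "\<bar>Vg n K 1 \<omega> - Vg n J 1 \<omega>\<bar> = \<bar>\<Sum>v\<in>{1..n}. (Lf n J v \<omega> + R n J K v \<omega>)\<^sup>2 - (Lf n J v \<omega>)\<^sup>2\<bar> / En n"
      using E assms(1) by (simp add: Vg_def Lf_split[OF assms(1)] diff_divide_distrib[symmetric] sum_subtractf)
    also have "\<dots> \<le> (\<Sum>v\<in>{1..n}. e * (Lf n J v \<omega>)\<^sup>2 + (1 + 1/e) * (R n J K v \<omega>)\<^sup>2) / En n"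
      using E by (intro divide_right_mono order_trans[OF sum_abs] sum_mono sq_ineq assms(2)) auto
    also have "\<dots> = F \<omega>" by (simp add: F_def sum.distrib sum_distrib_left)
    finally show ?thesis .
  qed
  have Fint: "integrable P F"
    unfolding F_def by (intro integrable_divide Bochner_Integration.integrable_add integrable_mult_right
        Bochner_Integration.integrable_sum Lf_sq_int R_sq_int)
  have "expectation (\<lambda>\<omega>. \<bar>Vg n K 1 \<omega> - Vg n J 1 \<omega>\<bar>) \<le> expectation F"
    by (rule integral_mono[OF _ Fint pw]) (intro integrable_abs Bochner_Integration.integrable_diff Vg_int)
  also have "expectation F = (e * (\<Sum>v\<in>{1..n}. \<Sum>u\<in>{1..J}. a n u v) + (1 + 1/e) * (\<Sum>v\<in>{1..n}. \<Sum>u\<in>{J<..K}. a n u v)) / En n"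
    unfolding F_def
    by (simp add: Bochner_Integration.integral_sum Bochner_Integration.integrable_sum Lf_sq_int R_sq_int E_Lf_sq E_R_sq)
  also have "\<dots> = (e * (\<Sum>u\<in>{1..J}. d n u) + (1 + 1/e) * (\<Sum>u\<in>{J<..K}. d n u)) / En n"
    unfolding d_def by (simp only: sum.swap[of _ "{1..n}" "{1..J}"] sum.swap[of _ "{1..n}" "{J<..K}"])
  also have "\<dots> \<le> (e * (2 * En n) + (1 + 1/e) * (\<Sum>u\<in>{J<..K}. d n u)) / En n"
    using assms E by (intro divide_right_mono add_mono mult_left_mono sum_d_le) auto
  also have "\<dots> = 2 * e + (1 + 1/e) * (\<Sum>u\<in>{J<..K}. d n u / En n)"
    using E by (simp add: sum_divide_distrib[symmetric] add_divide_distrib)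
  finally show ?thesis .
qed

end

context setting
begin

lemma diff_bound:
  assumes "J \<le> K" "e > 0"
  shows "expectation (\<lambda>\<omega>. \<bar>S K \<omega> - S J \<omega>\<bar>) \<le> 2 * e + (1 + 1/e) * (\<Sum>u\<in>{J<..K}. \<sigma> u u)"
proof (rule LIMSEQ_le)
  show "(\<lambda>n. expectation (\<lambda>\<omega>. \<bar>Vg n K 1 \<omega> - Vg n J 1 \<omega>\<bar>)) \<longlonglongrightarrow> expectation (\<lambda>\<omega>. \<bar>S K \<omega> - S J \<omega>\<bar>)"
  proof (rule integral_dominated_convergence[where w="\<lambda>_. 2 * K * B\<^sup>2 + 2 * J * B\<^sup>2"])
    show "AE \<omega> in P. (\<lambda>n. \<bar>Vg n K 1 \<omega> - Vg n J 1 \<omega>\<bar>) \<longlonglongrightarrow> \<bar>S K \<omega> - S J \<omega>\<bar>"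
      by (intro always_eventually allI tendsto_rabs tendsto_diff S_lim)
    show "AE \<omega> in P. norm \<bar>Vg n K 1 \<omega> - Vg n J 1 \<omega>\<bar> \<le> 2 * K * B\<^sup>2 + 2 * J * B\<^sup>2" for n
    proof (intro always_eventually allI)
      fix \<omega>
      show "norm \<bar>Vg n K 1 \<omega> - Vg n J 1 \<omega>\<bar> \<le> 2 * K * B\<^sup>2 + 2 * J * B\<^sup>2"
        using Vg_nonneg[of n K 1 \<omega>] Vg_bound[of n K 1 \<omega>] Vg_nonneg[of n J 1 \<omega>] Vg_bound[of n J 1 \<omega>]
        by auto
    qed
  qed auto
  show "(\<lambda>n. 2 * e + (1 + 1/e) * (\<Sum>u\<in>{J<..K}. d n u / En n)) \<longlonglongrightarrow> 2 * e + (1 + 1/e) * (\<Sum>u\<in>{J<..K}. \<sigma> u u)"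
    by (intro tendsto_add tendsto_mult tendsto_const tendsto_sum sigma_diag) auto
  show "\<exists>N. \<forall>n\<ge>N. expectation (\<lambda>\<omega>. \<bar>Vg n K 1 \<omega> - Vg n J 1 \<omega>\<bar>) \<le> 2 * e + (1 + 1/e) * (\<Sum>u\<in>{J<..K}. d n u / En n)"
    using diff_n_bound[OF assms] by auto
qed

definition "fdiag u = (if 1 \<le> u then \<sigma> u u else 0)"

lemma fdiag_summable: "summable fdiag"
proof (rule summableI_nonneg_bounded)
  show "0 \<le> fdiag n" for n by (simp add: fdiag_def sigma_diag_nonneg)
  show "sum fdiag {..<n} \<le> 2" for n
  proof -
    have "sum fdiag {..<n} = (\<Sum>u\<in>{1..<n}. \<sigma> u u)"
      by (rule sum.mono_neutral_cong_right) (auto simp: fdiag_def)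
    also have "\<dots> \<le> 2" by (rule sigma_diag_sum) auto
    finally show ?thesis .
  qed
qed

lemma S_cauchy:
  assumes "e > 0"
  shows "\<exists>N. \<forall>i\<ge>N. \<forall>j\<ge>N. expectation (\<lambda>\<omega>. norm (S i \<omega> - S j \<omega>)) < e"
proof -
  define \<epsilon> where "\<epsilon> = e / 4"
  define e' where "e' = e / (4 * (1 + 1/\<epsilon>))"
  have \<epsilon>: "\<epsilon> > 0" using assms by (simp add: \<epsilon>_def)
  have e': "e' > 0" using assms \<epsilon> by (simp add: e'_def add_pos_pos)
  obtain N where N: "\<And>m n. m \<ge> N \<Longrightarrow> norm (sum fdiag {m..<n}) < e'"
    using fdiag_summable[unfolded summable_Cauchy] e' by blast
  have main: "expectation (\<lambda>\<omega>. \<bar>S i \<omega> - S j \<omega>\<bar>) < e" if "j \<le> i" "N \<le> j" for i j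
  proof -
    have "(\<Sum>u\<in>{j<..i}. \<sigma> u u) = sum fdiag {Suc j..<Suc i}"
      by (rule sum.cong) (auto simp: fdiag_def)
    also have "\<dots> < e'" using N[of "Suc j" "Suc i"] that
      by (simp add: sum_nonneg fdiag_def sigma_diag_nonneg)
    finally have lt: "(\<Sum>u\<in>{j<..i}. \<sigma> u u) < e'" .
    have "expectation (\<lambda>\<omega>. \<bar>S i \<omega> - S j \<omega>\<bar>) \<le> 2 * \<epsilon> + (1 + 1/\<epsilon>) * (\<Sum>u\<in>{j<..i}. \<sigma> u u)"
      by (rule diff_bound[OF that(1) \<epsilon>])
    also have "\<dots> \<le> 2 * \<epsilon> + (1 + 1/\<epsilon>) * e'"
      using lt \<epsilon> by (intro add_left_mono mult_left_mono) auto
    also have "\<dots> < e"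
    proof -
      have "1 + 1/\<epsilon> > 0" using \<epsilon> by (simp add: add_pos_pos)
      then have "(1 + 1/\<epsilon>) * e' = e / 4" unfolding e'_def by (simp add: field_simps)
      then show ?thesis using assms by (simp add: \<epsilon>_def)
    qed
    finally show ?thesis .
  qed
  show ?thesis
  proof (intro exI allI impI)
    fix i j assume "i \<ge> N" "j \<ge> N"
    then show "expectation (\<lambda>\<omega>. norm (S i \<omega> - S j \<omega>)) < e"
      using main[of i j] main[of j i] by (cases "j \<le> i") (auto simp: abs_minus_commute)
  qed
qed

end

context setting
begin

lemma ex_rr: "\<exists>r. strict_mono r \<and> (AE \<omega> in P. Cauchy (\<lambda>i. S (r i) \<omega>))"
proof -
  obtain r where "strict_mono r" "AE \<omega> in P. Cauchy (\<lambda>i. S (r i) \<omega>)"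
  proof (rule cauchy_L1_AE_cauchy_subseq[of P S])
    show "integrable P (S n)" for n by (rule S_int)
    show "\<exists>N. \<forall>i\<ge>N. \<forall>j\<ge>N. LINT x|P. norm (S i x - S j x) < e" if "e > 0" for e
      using S_cauchy[OF that] by simp
  qed auto
  then show ?thesis by blast
qed

definition "rr = (SOME r. strict_mono r \<and> (AE \<omega> in P. Cauchy (\<lambda>i. S (r i) \<omega>)))"

lemma rr: "strict_mono rr" "AE \<omega> in P. Cauchy (\<lambda>i. S (rr i) \<omega>)"
  using someI_ex[OF ex_rr] unfolding rr_def[symmetric] by auto

definition "T \<omega> = lim (\<lambda>i. S (rr i) \<omega>)"

lemma T_meas[measurable]: "T \<in> borel_measurable P"
  unfolding T_def by measurable

lemma T_ae_lim: "AE \<omega> in P. (\<lambda>i. S (rr i) \<omega>) \<longlonglongrightarrow> T \<omega>"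
  using rr(2) by eventually_elim (simp add: T_def Cauchy_convergent_iff convergent_LIMSEQ_iff)

lemma T_nonneg: "AE \<omega> in P. 0 \<le> T \<omega>"
  using T_ae_lim by eventually_elim (rule LIMSEQ_le_const, assumption, simp add: S_nonneg)

lemma S_T_L1:
  assumes "e > 0"
  shows "\<exists>N. \<forall>K\<ge>N. integrable P (\<lambda>\<omega>. S K \<omega> - T \<omega>) \<and> expectation (\<lambda>\<omega>. \<bar>S K \<omega> - T \<omega>\<bar>) \<le> e"
proof -
  obtain N where N: "\<And>i j. i \<ge> N \<Longrightarrow> j \<ge> N \<Longrightarrow> expectation (\<lambda>\<omega>. norm (S i \<omega> - S j \<omega>)) < e"
    using S_cauchy[OF assms] by blast
  have "integrable P (\<lambda>\<omega>. S K \<omega> - T \<omega>) \<and> expectation (\<lambda>\<omega>. \<bar>S K \<omega> - T \<omega>\<bar>) \<le> e" if K: "K \<ge> N" for K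
  proof -
    have "(\<integral>\<^sup>+\<omega>. ennreal \<bar>S K \<omega> - T \<omega>\<bar> \<partial>P) = (\<integral>\<^sup>+\<omega>. liminf (\<lambda>i. ennreal \<bar>S K \<omega> - S (rr i) \<omega>\<bar>) \<partial>P)"
    proof (rule nn_integral_cong_AE)
      show "AE \<omega> in P. ennreal \<bar>S K \<omega> - T \<omega>\<bar> = liminf (\<lambda>i. ennreal \<bar>S K \<omega> - S (rr i) \<omega>\<bar>)"
        using T_ae_lim
      proof eventually_elim
        case (elim \<omega>)
        have "(\<lambda>i. ennreal \<bar>S K \<omega> - S (rr i) \<omega>\<bar>) \<longlonglongrightarrow> ennreal \<bar>S K \<omega> - T \<omega>\<bar>"
          by (intro tendsto_ennrealI tendsto_rabs tendsto_diff tendsto_const elim)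
        then show ?case using lim_imp_Liminf[OF trivial_limit_sequentially] by metis
      qed
    qed
    also have "\<dots> \<le> liminf (\<lambda>i. \<integral>\<^sup>+\<omega>. ennreal \<bar>S K \<omega> - S (rr i) \<omega>\<bar> \<partial>P)"
      by (rule nn_integral_liminf) simp
    also have "\<dots> \<le> liminf (\<lambda>i. ennreal e)"
    proof (rule Liminf_mono)
      have "\<forall>\<^sub>F i in sequentially. rr i \<ge> N"
        using eventually_ge_at_top[of N] by eventually_elim (use rr(1) seq_suble in \<open>blast intro: order_trans\<close>)
      then show "\<forall>\<^sub>F i in sequentially. (\<integral>\<^sup>+\<omega>. ennreal \<bar>S K \<omega> - S (rr i) \<omega>\<bar> \<partial>P) \<le> ennreal e"
      proof eventually_elim
        case (elim i)
        have "(\<integral>\<^sup>+\<omega>. ennreal \<bar>S K \<omega> - S (rr i) \<omega>\<bar> \<partial>P) = ennreal (expectation (\<lambda>\<omega>. \<bar>S K \<omega> - S (rr i) \<omega>\<bar>))"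
          by (rule nn_integral_eq_integral) (auto intro!: integrable_abs Bochner_Integration.integrable_diff S_int)
        also have "\<dots> \<le> ennreal e" using N[OF K elim] by (intro ennreal_leI) simp
        finally show ?case .
      qed
    qed
    also have "\<dots> = ennreal e" by (simp add: Liminf_const)
    finally have bnd: "(\<integral>\<^sup>+\<omega>. ennreal \<bar>S K \<omega> - T \<omega>\<bar> \<partial>P) \<le> ennreal e" .
    have int: "integrable P (\<lambda>\<omega>. S K \<omega> - T \<omega>)"
    proof (rule integrableI_bounded)
      show "(\<integral>\<^sup>+\<omega>. ennreal (norm (S K \<omega> - T \<omega>)) \<partial>P) < \<infinity>"
        using bnd by (simp add: order_le_less_trans)
    qed simp
    have "ennreal (expectation (\<lambda>\<omega>. \<bar>S K \<omega> - T \<omega>\<bar>)) = (\<integral>\<^sup>+\<omega>. ennreal \<bar>S K \<omega> - T \<omega>\<bar> \<partial>P)"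
      by (rule nn_integral_eq_integral[symmetric]) (auto intro: integrable_abs int)
    with bnd have "ennreal (expectation (\<lambda>\<omega>. \<bar>S K \<omega> - T \<omega>\<bar>)) \<le> ennreal e" by simp
    then have "expectation (\<lambda>\<omega>. \<bar>S K \<omega> - T \<omega>\<bar>) \<le> e"
      using assms by (simp add: ennreal_le_iff)
    with int show ?thesis by simp
  qed
  then show ?thesis by blast
qed

lemma T_int: "integrable P T"
proof -
  obtain N where "integrable P (\<lambda>\<omega>. S N \<omega> - T \<omega>)"
    using S_T_L1[of 1] by auto
  then have "integrable P (\<lambda>\<omega>. S N \<omega> - (S N \<omega> - T \<omega>))"
    by (rule Bochner_Integration.integrable_diff[OF S_int])
  moreover have "(\<lambda>\<omega>. S N \<omega> - (S N \<omega> - T \<omega>)) = T" by auto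
  ultimately show ?thesis by metis
qed

lemma S_T_tendsto: "(\<lambda>K. expectation (\<lambda>\<omega>. \<bar>S K \<omega> - T \<omega>\<bar>)) \<longlonglongrightarrow> 0"
proof (rule LIMSEQ_I)
  fix e :: real assume "e > 0"
  then obtain N where "\<forall>K\<ge>N. expectation (\<lambda>\<omega>. \<bar>S K \<omega> - T \<omega>\<bar>) \<le> e / 2"
    using S_T_L1[of "e/2"] by auto
  then show "\<exists>N. \<forall>K\<ge>N. norm (expectation (\<lambda>\<omega>. \<bar>S K \<omega> - T \<omega>\<bar>) - 0) < e"
    using \<open>e > 0\<close> by (auto intro!: exI[of _ N] simp: abs_of_nonneg integral_nonneg_AE)
qed

lemma L1_quad: "L1_quad_limit P X \<sigma> M T"
  unfolding L1_quad_limit_def using T_int S_T_tendsto by (simp add: S_def Y_def)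

end

lemma std_normal_measure_prob: "prob_space std_normal_measure"
  unfolding std_normal_measure_def by (rule prob_space_normal_density) simp

lemma nn_integral_normal_density: "0 < s \<Longrightarrow> (\<integral>\<^sup>+x. ennreal (normal_density \<mu> s x) \<partial>lborel) = 1"
  by (subst nn_integral_eq_integral) auto

lemma sets_std_normal[simp, measurable_cong]: "sets std_normal_measure = sets borel"
  by (simp add: std_normal_measure_def)

lemma space_std_normal[simp]: "space std_normal_measure = UNIV"
  by (simp add: std_normal_measure_def)

lemma nn_integral_std_normal:
  assumes [measurable]: "f \<in> borel_measurable borel"
  shows "(\<integral>\<^sup>+w. f w \<partial>std_normal_measure) = (\<integral>\<^sup>+w. ennreal (std_normal_density w) * f w \<partial>lborel)"
  unfolding std_normal_measure_def by (subst nn_integral_density) auto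

lemma gauss_mgf: "(\<integral>\<^sup>+w. ennreal (exp (t * w)) \<partial>std_normal_measure) = ennreal (exp (t\<^sup>2 / 2))"
proof -
  have eq: "std_normal_density w * exp (t * w) = exp (t\<^sup>2 / 2) * normal_density t 1 w" for w
  proof -
    have "- w\<^sup>2 / 2 + t * w = t\<^sup>2 / 2 + (- (w - t)\<^sup>2 / 2)" by (simp add: power2_eq_square field_simps)
    then show ?thesis
      by (simp add: normal_density_def exp_add[symmetric] mult_ac)
  qed
  have "(\<integral>\<^sup>+w. ennreal (exp (t * w)) \<partial>std_normal_measure) = (\<integral>\<^sup>+w. ennreal (exp (t\<^sup>2 / 2)) * ennreal (normal_density t 1 w) \<partial>lborel)"
    by (subst nn_integral_std_normal) (auto simp: ennreal_mult'[symmetric] eq intro!: nn_integral_cong)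
  also have "\<dots> = ennreal (exp (t\<^sup>2 / 2))"
    by (simp add: nn_integral_cmult nn_integral_normal_density)
  finally show ?thesis .
qed

lemma gauss_sq: "(\<integral>\<^sup>+w. ennreal (exp (w\<^sup>2 / 4)) \<partial>std_normal_measure) = ennreal (sqrt 2)"
proof -
  have eq: "std_normal_density w * exp (w\<^sup>2 / 4) = sqrt 2 * normal_density 0 (sqrt 2) w" for w
  proof -
    have "- w\<^sup>2 / 2 + w\<^sup>2 / 4 = - w\<^sup>2 / 4" by simp
    then have "exp (- w\<^sup>2 / 2) * exp (w\<^sup>2 / 4) = exp (- w\<^sup>2 / 4)" by (simp add: exp_add[symmetric])
    moreover have "sqrt (pi * 4) = sqrt 2 * sqrt (pi * 2)"
      by (simp add: real_sqrt_mult[symmetric])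
    ultimately show ?thesis
      by (simp add: normal_density_def mult_ac)
  qed
  have "(\<integral>\<^sup>+w. ennreal (exp (w\<^sup>2 / 4)) \<partial>std_normal_measure) = (\<integral>\<^sup>+w. ennreal (sqrt 2) * ennreal (normal_density 0 (sqrt 2) w) \<partial>lborel)"
    by (subst nn_integral_std_normal) (auto simp: ennreal_mult'[symmetric] eq intro!: nn_integral_cong)
  also have "\<dots> = ennreal (sqrt 2)"
    by (simp add: nn_integral_cmult nn_integral_normal_density)
  finally show ?thesis .
qed

context setting
begin

definition "Bp = B + 1"

lemma Bp_pos: "Bp > 0" using B_nonneg by (simp add: Bp_def)

lemma Y_in: "Y u \<omega> \<in> {-Bp..Bp}"
  using Y_bound[of u \<omega>] by (auto simp: Bp_def abs_le_iff)

lemma hoeff1: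
  assumes "1 \<le> u"
  shows "(\<integral>\<^sup>+\<omega>. ennreal (exp (l * Y u \<omega>)) \<partial>P) \<le> ennreal (exp (l\<^sup>2 * Bp\<^sup>2 / 2))"
proof -
  have E: "expectation (Y u) = 0" by (rule Y_mean[OF assms])
  have E': "expectation (\<lambda>\<omega>. - Y u \<omega>) = 0" using E by simp
  have ib: "interval_bounded_random_variable P (Y u) (-Bp) Bp"
    unfolding interval_bounded_random_variable_def interval_bounded_random_variable_axioms_def
    using P Y_in by simp
  have ib': "interval_bounded_random_variable P (\<lambda>\<omega>. - Y u \<omega>) (-Bp) Bp"
    unfolding interval_bounded_random_variable_def interval_bounded_random_variable_axioms_def
    using P Y_in by (simp add: minus_le_iff le_minus_iff)
  have sq: "(Bp - - Bp)\<^sup>2 / 8 = Bp\<^sup>2 / 2" by (simp add: power2_eq_square field_simps)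
  consider "l > 0" | "l < 0" | "l = 0" by linarith
  then show ?thesis
  proof cases
    case 1
    have "(\<integral>\<^sup>+\<omega>. ennreal (exp (l * (Y u \<omega> - expectation (Y u)))) \<partial>P) \<le> ennreal (exp (l\<^sup>2 * (Bp - - Bp)\<^sup>2 / 8))"
      by (rule interval_bounded_random_variable.Hoeffdings_lemma_nn_integral[OF ib 1])
    then show ?thesis unfolding E by (simp only: diff_zero times_divide_eq_right[symmetric] sq)
  next
    case 2
    have "- l > 0" using 2 by simp
    have "(\<integral>\<^sup>+\<omega>. ennreal (exp ((- l) * (- Y u \<omega> - expectation (\<lambda>\<omega>. - Y u \<omega>)))) \<partial>P) \<le> ennreal (exp ((- l)\<^sup>2 * (Bp - - Bp)\<^sup>2 / 8))"
      by (rule interval_bounded_random_variable.Hoeffdings_lemma_nn_integral[OF ib' \<open>- l > 0\<close>])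
    then show ?thesis unfolding E' by (simp only: diff_zero times_divide_eq_right[symmetric] sq minus_mult_minus power2_minus)
  next
    case 3
    then show ?thesis by (simp add: emeasure_space_1)
  qed
qed

lemma hoeff:
  assumes N: "finite N" "N \<subseteq> {1..}"
  shows "(\<integral>\<^sup>+\<omega>. ennreal (exp (l * (\<Sum>u\<in>N. Y u \<omega>))) \<partial>P) \<le> ennreal (exp (l\<^sup>2 * card N * Bp\<^sup>2 / 2))"
proof -
  have "(\<integral>\<^sup>+\<omega>. ennreal (exp (l * (\<Sum>u\<in>N. Y u \<omega>))) \<partial>P) = (\<integral>\<^sup>+\<omega>. (\<Prod>u\<in>N. ennreal (exp (l * Y u \<omega>))) \<partial>P)"
    by (intro nn_integral_cong) (simp add: sum_distrib_left exp_sum N(1) prod_ennreal)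
  also have "\<dots> = (\<Prod>u\<in>N. \<integral>\<^sup>+\<omega>. ennreal (exp (l * Y u \<omega>)) \<partial>P)"
  proof (rule indep_vars_nn_integral[OF N(1)])
    show "indep_vars (\<lambda>_. borel) (\<lambda>u \<omega>. ennreal (exp (l * Y u \<omega>))) N"
      by (rule indep_vars_compose2[OF indep_vars_subset[OF indep_Y N(2)]]) simp
  qed simp
  also have "\<dots> \<le> (\<Prod>u\<in>N. ennreal (exp (l\<^sup>2 * Bp\<^sup>2 / 2)))"
    using N(2) by (intro prod_mono_ennreal hoeff1) auto
  also have "\<dots> = ennreal (exp (l\<^sup>2 * card N * Bp\<^sup>2 / 2))"
  proof -
    have "exp (l\<^sup>2 * card N * Bp\<^sup>2 / 2) = exp (l\<^sup>2 * Bp\<^sup>2 / 2) ^ card N"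
      by (simp add: exp_of_nat_mult[symmetric] mult_ac)
    then show ?thesis by (simp only: prod_constant ennreal_power[OF exp_ge_zero])
  qed
  finally show ?thesis .
qed

lemma subG:
  assumes N: "finite N" "N \<subseteq> {1..}" "N \<noteq> {}"
  shows "(\<integral>\<^sup>+\<omega>. ennreal (exp ((\<Sum>u\<in>N. Y u \<omega>)\<^sup>2 / (4 * Bp\<^sup>2 * card N))) \<partial>P) \<le> ennreal (sqrt 2)"
proof -
  interpret N: prob_space std_normal_measure by (rule std_normal_measure_prob)
  interpret PN: pair_prob_space P std_normal_measure ..
  define n where "n = real (card N)"
  have n: "n > 0" using N by (simp add: n_def card_gt_0_iff)
  define c where "c = 1 / (Bp * sqrt (2 * n))"
  have c2: "c\<^sup>2 / 2 = 1 / (4 * Bp\<^sup>2 * n)"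
    using n Bp_pos by (simp add: c_def power2_eq_square field_simps)
  have c3: "c\<^sup>2 * n * Bp\<^sup>2 / 2 = 1 / 4"
    using n Bp_pos by (simp add: c_def power2_eq_square field_simps)
  let ?s = "\<lambda>\<omega>. \<Sum>u\<in>N. Y u \<omega>"
  have "(\<integral>\<^sup>+\<omega>. ennreal (exp ((?s \<omega>)\<^sup>2 / (4 * Bp\<^sup>2 * card N))) \<partial>P) =
      (\<integral>\<^sup>+\<omega>. (\<integral>\<^sup>+w. ennreal (exp ((c * w) * ?s \<omega>)) \<partial>std_normal_measure) \<partial>P)"
  proof (intro nn_integral_cong)
    fix \<omega>
    have "(\<integral>\<^sup>+w. ennreal (exp ((c * w) * ?s \<omega>)) \<partial>std_normal_measure) =
        (\<integral>\<^sup>+w. ennreal (exp ((c * ?s \<omega>) * w)) \<partial>std_normal_measure)"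
      by (simp add: mult_ac)
    also have "\<dots> = ennreal (exp ((c * ?s \<omega>)\<^sup>2 / 2))" by (rule gauss_mgf)
    also have "(c * ?s \<omega>)\<^sup>2 / 2 = (?s \<omega>)\<^sup>2 / (4 * Bp\<^sup>2 * card N)"
      using c2 by (simp add: power_mult_distrib n_def field_simps)
    finally show "ennreal (exp ((?s \<omega>)\<^sup>2 / (4 * Bp\<^sup>2 * card N))) =
        (\<integral>\<^sup>+w. ennreal (exp ((c * w) * ?s \<omega>)) \<partial>std_normal_measure)" by simp
  qed
  also have "\<dots> = (\<integral>\<^sup>+w. (\<integral>\<^sup>+\<omega>. ennreal (exp ((c * w) * ?s \<omega>)) \<partial>P) \<partial>std_normal_measure)"
    by (rule PN.Fubini'[symmetric]) measurable
  also have "\<dots> \<le> (\<integral>\<^sup>+w. ennreal (exp ((c * w)\<^sup>2 * card N * Bp\<^sup>2 / 2)) \<partial>std_normal_measure)"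
    by (intro nn_integral_mono hoeff N)
  also have "\<dots> = (\<integral>\<^sup>+w. ennreal (exp (w\<^sup>2 / 4)) \<partial>std_normal_measure)"
  proof (intro nn_integral_cong)
    fix w
    have "(c * w)\<^sup>2 * card N * Bp\<^sup>2 / 2 = w\<^sup>2 * (c\<^sup>2 * n * Bp\<^sup>2 / 2)"
      by (simp add: n_def power_mult_distrib)
    then show "ennreal (exp ((c * w)\<^sup>2 * card N * Bp\<^sup>2 / 2)) = ennreal (exp (w\<^sup>2 / 4))"
      using c3 by simp
  qed
  also have "\<dots> = ennreal (sqrt 2)" by (rule gauss_sq)
  finally show ?thesis .
qed

end

context setting
begin

definition "c0 = 1 / (8 * Bp\<^sup>2)"

lemma c0_pos: "c0 > 0" using Bp_pos by (simp add: c0_def)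

definition "Nb n K v = {u\<in>{1..K}. a n u v = 1}"

lemma Nb_fin: "finite (Nb n K v)" by (simp add: Nb_def)
lemma Nb_sub: "Nb n K v \<subseteq> {1..}" by (auto simp: Nb_def)

lemma card_Nb: "real (card (Nb n K v)) = (\<Sum>u\<in>{1..K}. a n u v)"
proof -
  have "(\<Sum>u\<in>{1..K}. a n u v) = (\<Sum>u\<in>{1..K}. if a n u v = 1 then 1 else 0)"
    by (intro sum.cong refl) (use a_01 in auto)
  also have "\<dots> = (\<Sum>u\<in>Nb n K v. 1)" unfolding Nb_def by (rule sum.inter_filter[symmetric]) simp
  finally show ?thesis by simp
qed

lemma Lf_Nb: "Lf n K v \<omega> = (\<Sum>u\<in>Nb n K v. Y u \<omega>)"
proof -
  have "Lf n K v \<omega> = (\<Sum>u\<in>{1..K}. if a n u v = 1 then Y u \<omega> else 0)"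
    unfolding Lf_def by (intro sum.cong refl) (use a_01 in auto)
  also have "\<dots> = (\<Sum>u\<in>Nb n K v. Y u \<omega>)" unfolding Nb_def by (rule sum.inter_filter[symmetric]) simp
  finally show ?thesis .
qed

lemma Nb_zero: "card (Nb n K 0) = 0"
proof -
  have "a n u 0 = 0" for u using a_supp[of n u 0] by auto
  then show ?thesis by (simp add: Nb_def)
qed

lemma exp_sum_le:
  fixes p y :: "nat \<Rightarrow> real"
  assumes "finite I" "I \<noteq> {}" "sum p I = 1" "\<And>i. i \<in> I \<Longrightarrow> p i \<ge> 0"
  shows "exp (\<Sum>i\<in>I. p i * y i) \<le> (\<Sum>i\<in>I. p i * exp (y i))"
  using convex_on_sum[OF assms(1,2) exp_convex assms(3) assms(4), of y] by simp

lemma Vg_exp: "(\<integral>\<^sup>+\<omega>. ennreal (exp (c0 * Vg n K lo \<omega>)) \<partial>P) \<le> ennreal (sqrt 2)"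
proof (cases "En n = 0")
  case True
  then show ?thesis by (simp add: Vg_def emeasure_space_1)
next
  case False
  then have E: "En n > 0" using En_nonneg[of n] by simp
  define nv where "nv v = real (card (Nb n K v))" for v
  define V where "V = {v\<in>{lo..n}. nv v > 0}"
  have V0: "0 \<notin> V" by (simp add: V_def nv_def Nb_zero)
  have finV: "finite V" by (simp add: V_def)
  define p where "p v = (if v = 0 then 1 - (\<Sum>v\<in>V. nv v / (2 * En n)) else nv v / (2 * En n))" for v
  define y where "y v \<omega> = (if v = 0 then 0 else (Lf n K v \<omega>)\<^sup>2 / (4 * Bp\<^sup>2 * nv v))" for v \<omega>
  have sumle: "(\<Sum>v\<in>V. nv v / (2 * En n)) \<le> 1"
  proof -
    have "(\<Sum>v\<in>V. nv v) \<le> (\<Sum>v\<in>{lo..n}. nv v)"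
      by (rule sum_mono2) (auto simp: V_def nv_def)
    also have "\<dots> = (\<Sum>u\<in>{1..K}. \<Sum>v\<in>{lo..n}. a n u v)"
      by (simp add: nv_def card_Nb sum.swap[of _ "{lo..n}"])
    also have "\<dots> \<le> (\<Sum>u\<in>{1..K}. d n u)" by (intro sum_mono sum_a_le_d)
    also have "\<dots> \<le> 2 * En n" by (rule sum_d_le) simp
    finally show ?thesis using E by (simp add: sum_divide_distrib[symmetric] divide_le_eq)
  qed
  have p_nonneg: "p v \<ge> 0" for v using sumle E by (auto simp: p_def nv_def)
  have pV: "sum p V = (\<Sum>v\<in>V. nv v / (2 * En n))"
    using V0 by (intro sum.cong refl) (auto simp: p_def)
  have p_sum: "sum p (insert 0 V) = 1"
    using V0 finV pV by (simp add: p_def)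
  have key: "c0 * Vg n K lo \<omega> = (\<Sum>v\<in>insert 0 V. p v * y v \<omega>)" for \<omega>
  proof -
    have "Vg n K lo \<omega> = (\<Sum>v\<in>V. (Lf n K v \<omega>)\<^sup>2) / En n"
    proof -
      have "(\<Sum>v\<in>{lo..n}. (Lf n K v \<omega>)\<^sup>2) = (\<Sum>v\<in>V. (Lf n K v \<omega>)\<^sup>2)"
        by (rule sum.mono_neutral_right) (auto simp: V_def nv_def Lf_Nb card_eq_0_iff Nb_fin)
      then show ?thesis by (simp add: Vg_def)
    qed
    moreover have "p v * y v \<omega> = c0 * (Lf n K v \<omega>)\<^sup>2 / En n" if "v \<in> V" for v
    proof -
      have "v \<noteq> 0" using that V0 by metis
      moreover have "nv v > 0" using that by (simp add: V_def)
      ultimately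
      show ?thesis using E Bp_pos
        by (simp add: p_def y_def c0_def field_simps power2_eq_square)
    qed
    ultimately show ?thesis using V0 finV
      by (simp add: p_def y_def sum_divide_distrib sum_distrib_left)
  qed
  have "(\<integral>\<^sup>+\<omega>. ennreal (exp (c0 * Vg n K lo \<omega>)) \<partial>P) \<le> (\<integral>\<^sup>+\<omega>. ennreal (\<Sum>v\<in>insert 0 V. p v * exp (y v \<omega>)) \<partial>P)"
    unfolding key using finV p_sum p_nonneg
    by (intro nn_integral_mono ennreal_leI exp_sum_le) auto
  also have "\<dots> = (\<Sum>v\<in>insert 0 V. ennreal (p v) * (\<integral>\<^sup>+\<omega>. ennreal (exp (y v \<omega>)) \<partial>P))"
  proof -
    have "(\<integral>\<^sup>+\<omega>. ennreal (\<Sum>v\<in>insert 0 V. p v * exp (y v \<omega>)) \<partial>P) =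
        (\<integral>\<^sup>+\<omega>. (\<Sum>v\<in>insert 0 V. ennreal (p v) * ennreal (exp (y v \<omega>))) \<partial>P)"
      using p_nonneg by (intro nn_integral_cong) (simp add: ennreal_mult'[symmetric] sum_ennreal)
    also have "\<dots> = (\<Sum>v\<in>insert 0 V. ennreal (p v) * (\<integral>\<^sup>+\<omega>. ennreal (exp (y v \<omega>)) \<partial>P))"
      by (subst nn_integral_sum) (auto simp: y_def nn_integral_cmult)
    finally show ?thesis .
  qed
  also have "\<dots> \<le> (\<Sum>v\<in>insert 0 V. ennreal (p v) * ennreal (sqrt 2))"
  proof (intro sum_mono mult_left_mono)
    fix v assume v: "v \<in> insert 0 V"
    show "(\<integral>\<^sup>+\<omega>. ennreal (exp (y v \<omega>)) \<partial>P) \<le> ennreal (sqrt 2)"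
    proof (cases "v = 0")
      case True then show ?thesis by (simp add: y_def emeasure_space_1)
    next
      case False
      then have vV: "v \<in> V" using v by simp
      then have "Nb n K v \<noteq> {}" by (auto simp: V_def nv_def)
      then show ?thesis using False subG[OF Nb_fin Nb_sub]
        by (simp add: y_def Lf_Nb nv_def)
    qed
  qed simp
  also have "\<dots> = ennreal (sqrt 2)"
    using p_sum p_nonneg by (simp add: ennreal_mult'[symmetric] sum_distrib_right[symmetric] )
  finally show ?thesis .
qed

end

lemma subseq_crit:
  fixes X :: "nat \<Rightarrow> real"
  assumes "\<And>r::nat\<Rightarrow>nat. strict_mono r \<Longrightarrow> \<exists>r'::nat\<Rightarrow>nat. strict_mono r' \<and> (\<lambda>n. X (r (r' n))) \<longlonglongrightarrow> L"
  shows "X \<longlonglongrightarrow> L"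
proof (rule ccontr)
  assume "\<not> X \<longlonglongrightarrow> L"
  then obtain e where e: "e > 0" and fr: "\<forall>N. \<exists>n\<ge>N. \<not> dist (X n) L < e"
    unfolding lim_sequentially by blast
  define A where "A = {n. dist (X n) L \<ge> e}"
  have "infinite A" unfolding infinite_nat_iff_unbounded_le A_def using fr by (auto simp: not_less)
  define r where "r = enumerate A"
  have r: "strict_mono r" unfolding r_def by (rule strict_mono_enumerate[OF \<open>infinite A\<close>])
  have rA: "dist (X (r n)) L \<ge> e" for n
    using enumerate_in_set[OF \<open>infinite A\<close>, of n] by (simp add: r_def A_def)
  obtain r' where "strict_mono r'" "(\<lambda>n. X (r (r' n))) \<longlonglongrightarrow> L" using assms[OF r] by blast
  then obtain N where "\<forall>n\<ge>N. dist (X (r (r' n))) L < e" using e unfolding lim_sequentially by blast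
  then show False using rA[of "r' N"] by auto
qed

context setting
begin

lemma S_exp: "(\<integral>\<^sup>+\<omega>. ennreal (exp (c0 * S K \<omega>)) \<partial>P) \<le> ennreal (sqrt 2)"
proof -
  have "(\<integral>\<^sup>+\<omega>. ennreal (exp (c0 * S K \<omega>)) \<partial>P) = (\<integral>\<^sup>+\<omega>. liminf (\<lambda>n. ennreal (exp (c0 * Vg n K 1 \<omega>))) \<partial>P)"
  proof (intro nn_integral_cong)
    fix \<omega>
    have "(\<lambda>n. ennreal (exp (c0 * Vg n K 1 \<omega>))) \<longlonglongrightarrow> ennreal (exp (c0 * S K \<omega>))"
      by (intro tendsto_ennrealI tendsto_exp tendsto_mult tendsto_const S_lim)
    then show "ennreal (exp (c0 * S K \<omega>)) = liminf (\<lambda>n. ennreal (exp (c0 * Vg n K 1 \<omega>)))"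
      using lim_imp_Liminf[OF trivial_limit_sequentially] by metis
  qed
  also have "\<dots> \<le> liminf (\<lambda>n. \<integral>\<^sup>+\<omega>. ennreal (exp (c0 * Vg n K 1 \<omega>)) \<partial>P)"
    by (rule nn_integral_liminf) simp
  also have "\<dots> \<le> liminf (\<lambda>n. ennreal (sqrt 2))"
    by (intro Liminf_mono always_eventually allI Vg_exp)
  also have "\<dots> = ennreal (sqrt 2)" by (simp add: Liminf_const)
  finally show ?thesis .
qed

lemma T_exp: "(\<integral>\<^sup>+\<omega>. ennreal (exp (c0 * T \<omega>)) \<partial>P) \<le> ennreal (sqrt 2)"
proof -
  have "(\<integral>\<^sup>+\<omega>. ennreal (exp (c0 * T \<omega>)) \<partial>P) = (\<integral>\<^sup>+\<omega>. liminf (\<lambda>i. ennreal (exp (c0 * S (rr i) \<omega>))) \<partial>P)"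
  proof (intro nn_integral_cong_AE)
    show "AE \<omega> in P. ennreal (exp (c0 * T \<omega>)) = liminf (\<lambda>i. ennreal (exp (c0 * S (rr i) \<omega>)))"
      using T_ae_lim
    proof eventually_elim
      case (elim \<omega>)
      have "(\<lambda>i. ennreal (exp (c0 * S (rr i) \<omega>))) \<longlonglongrightarrow> ennreal (exp (c0 * T \<omega>))"
        by (intro tendsto_ennrealI tendsto_exp tendsto_mult tendsto_const elim)
      then show ?case using lim_imp_Liminf[OF trivial_limit_sequentially] by metis
    qed
  qed
  also have "\<dots> \<le> liminf (\<lambda>i. \<integral>\<^sup>+\<omega>. ennreal (exp (c0 * S (rr i) \<omega>)) \<partial>P)"
    by (rule nn_integral_liminf) simp
  also have "\<dots> \<le> liminf (\<lambda>n. ennreal (sqrt 2))"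
    by (intro Liminf_mono always_eventually allI S_exp)
  also have "\<dots> = ennreal (sqrt 2)" by (simp add: Liminf_const)
  finally show ?thesis .
qed

lemma exp_int_bound:
  assumes [measurable]: "f \<in> borel_measurable P"
    and AEf: "AE \<omega> in P. 0 \<le> f \<omega>"
    and nn: "(\<integral>\<^sup>+\<omega>. ennreal (exp (c0 * f \<omega>)) \<partial>P) \<le> ennreal (sqrt 2)"
  shows "integrable P (\<lambda>\<omega>. exp (c0 * \<bar>f \<omega>\<bar>))" "expectation (\<lambda>\<omega>. exp (c0 * \<bar>f \<omega>\<bar>)) \<le> sqrt 2"
proof -
  have eq: "(\<integral>\<^sup>+\<omega>. ennreal (exp (c0 * \<bar>f \<omega>\<bar>)) \<partial>P) = (\<integral>\<^sup>+\<omega>. ennreal (exp (c0 * f \<omega>)) \<partial>P)"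
  proof -
    have "AE \<omega> in P. ennreal (exp (c0 * \<bar>f \<omega>\<bar>)) = ennreal (exp (c0 * f \<omega>))"
      using AEf by eventually_elim simp
    then show ?thesis by (rule nn_integral_cong_AE)
  qed
  show int: "integrable P (\<lambda>\<omega>. exp (c0 * \<bar>f \<omega>\<bar>))"
  proof (rule integrableI_bounded)
    show "(\<integral>\<^sup>+\<omega>. ennreal (norm (exp (c0 * \<bar>f \<omega>\<bar>))) \<partial>P) < \<infinity>"
      using eq nn by (simp add: order_le_less_trans)
  qed simp
  have "ennreal (expectation (\<lambda>\<omega>. exp (c0 * \<bar>f \<omega>\<bar>))) = (\<integral>\<^sup>+\<omega>. ennreal (exp (c0 * \<bar>f \<omega>\<bar>)) \<partial>P)"
    by (rule nn_integral_eq_integral[symmetric]) (use int in auto)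
  with eq nn have "ennreal (expectation (\<lambda>\<omega>. exp (c0 * \<bar>f \<omega>\<bar>))) \<le> ennreal (sqrt 2)" by simp
  then show "expectation (\<lambda>\<omega>. exp (c0 * \<bar>f \<omega>\<bar>)) \<le> sqrt 2" by (simp add: ennreal_le_iff)
qed

lemma S_exp_int: "integrable P (\<lambda>\<omega>. exp (c0 * \<bar>S K \<omega>\<bar>))" "expectation (\<lambda>\<omega>. exp (c0 * \<bar>S K \<omega>\<bar>)) \<le> sqrt 2"
  using exp_int_bound[OF S_meas _ S_exp] S_nonneg by auto

lemma T_exp_int: "integrable P (\<lambda>\<omega>. exp (c0 * \<bar>T \<omega>\<bar>))" "expectation (\<lambda>\<omega>. exp (c0 * \<bar>T \<omega>\<bar>)) \<le> sqrt 2"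
  using exp_int_bound[OF T_meas T_nonneg T_exp] by auto

lemma conv_bc:
  fixes h :: "real \<Rightarrow> real"
  assumes hc: "continuous_on UNIV h" and hb: "\<And>x. \<bar>h x\<bar> \<le> C"
  shows "(\<lambda>K. expectation (\<lambda>\<omega>. h (S K \<omega>))) \<longlonglongrightarrow> expectation (\<lambda>\<omega>. h (T \<omega>))"
proof (rule subseq_crit)
  have hm[measurable]: "h \<in> borel_measurable borel" by (rule borel_measurable_continuous_onI[OF hc])
  fix r :: "nat \<Rightarrow> nat" assume r: "strict_mono r"
  have L1: "(\<lambda>n. expectation (\<lambda>\<omega>. norm (S (r n) \<omega> - T \<omega>))) \<longlonglongrightarrow> 0"
    using LIMSEQ_subseq_LIMSEQ[OF S_T_tendsto r] by (simp add: comp_def)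
  obtain r' where r': "strict_mono r'" "AE \<omega> in P. (\<lambda>n. S (r (r' n)) \<omega> - T \<omega>) \<longlonglongrightarrow> 0"
    using tendsto_L1_AE_subseq[of P "\<lambda>n \<omega>. S (r n) \<omega> - T \<omega>", OF _ L1]
    by (auto intro: Bochner_Integration.integrable_diff S_int T_int)
  have "(\<lambda>n. expectation (\<lambda>\<omega>. h (S (r (r' n)) \<omega>))) \<longlonglongrightarrow> expectation (\<lambda>\<omega>. h (T \<omega>))"
  proof (rule integral_dominated_convergence[where w="\<lambda>_. C"])
    show "AE \<omega> in P. (\<lambda>n. h (S (r (r' n)) \<omega>)) \<longlonglongrightarrow> h (T \<omega>)"
      using r'(2)
    proof eventually_elim
      case (elim \<omega>)
      then have "(\<lambda>n. S (r (r' n)) \<omega> - T \<omega> + T \<omega>) \<longlonglongrightarrow> 0 + T \<omega>" by (intro tendsto_add) auto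
      then have "(\<lambda>n. S (r (r' n)) \<omega>) \<longlonglongrightarrow> T \<omega>" by simp
      then show ?case by (rule continuous_on_tendsto_compose[OF hc]) auto
    qed
  qed (use hb in auto)
  then show "\<exists>r'. strict_mono r' \<and> (\<lambda>n. expectation (\<lambda>\<omega>. h (S (r (r' n)) \<omega>))) \<longlonglongrightarrow> expectation (\<lambda>\<omega>. h (T \<omega>))"
    using r' by blast
qed

end

context setting
begin

lemma growth_int:
  fixes H :: "real \<Rightarrow> real"
  assumes hc: "continuous_on UNIV H" and hb: "\<And>x. \<bar>H x\<bar> \<le> A * exp (c0 * \<bar>x\<bar> / 2)"
    and [measurable]: "f \<in> borel_measurable P" and fi: "integrable P (\<lambda>\<omega>. exp (c0 * \<bar>f \<omega>\<bar>))"
  shows "integrable P (\<lambda>\<omega>. H (f \<omega>))"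
proof -
  have hm[measurable]: "H \<in> borel_measurable borel" by (rule borel_measurable_continuous_onI[OF hc])
  show ?thesis
  proof (rule Bochner_Integration.integrable_bound[OF integrable_mult_right[OF fi, of A]])
    show "AE \<omega> in P. norm (H (f \<omega>)) \<le> norm (A * exp (c0 * \<bar>f \<omega>\<bar>))"
    proof (intro always_eventually allI)
      fix \<omega>
      have A: "A \<ge> 0" using hb[of 0] abs_ge_zero[of "H 0"] by (metis exp_gt_zero order_trans zero_le_mult_iff not_le mult_pos_pos less_le_not_le)
      have "exp (c0 * \<bar>f \<omega>\<bar> / 2) \<le> exp (c0 * \<bar>f \<omega>\<bar>)" using c0_pos by simp
      then show "norm (H (f \<omega>)) \<le> norm (A * exp (c0 * \<bar>f \<omega>\<bar>))"
      proof -
        have "\<bar>H (f \<omega>)\<bar> \<le> A * exp (c0 * \<bar>f \<omega>\<bar>)"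
          using hb[of "f \<omega>"] mult_left_mono[OF \<open>exp (c0 * \<bar>f \<omega>\<bar> / 2) \<le> exp (c0 * \<bar>f \<omega>\<bar>)\<close> A] by linarith
        then show ?thesis using A by simp
      qed
    qed
  qed simp
qed

definition clp :: "real \<Rightarrow> real \<Rightarrow> real" where "clp Rr x = max (- Rr) (min x Rr)"

lemma clp_cont: "continuous_on UNIV (clp Rr)"
  unfolding clp_def by (intro continuous_intros)

lemma clp_abs: "Rr \<ge> 0 \<Longrightarrow> \<bar>clp Rr x\<bar> \<le> Rr"
  by (auto simp: clp_def)

lemma clp_id: "\<bar>x\<bar> \<le> Rr \<Longrightarrow> clp Rr x = x"
  by (auto simp: clp_def)

lemma trunc_diff:
  fixes H :: "real \<Rightarrow> real"
  assumes hb: "\<And>x. \<bar>H x\<bar> \<le> A * exp (c0 * \<bar>x\<bar> / 2)" and Rr: "Rr \<ge> 0"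
  shows "\<bar>H x - H (clp Rr x)\<bar> \<le> 2 * A * exp (- c0 * Rr / 2) * exp (c0 * \<bar>x\<bar>)"
proof (cases "\<bar>x\<bar> \<le> Rr")
  case True
  have A: "A \<ge> 0" using hb[of 0] abs_ge_zero[of "H 0"] by (metis exp_gt_zero order_trans zero_le_mult_iff not_le mult_pos_pos less_le_not_le)
  show ?thesis using True A by (simp add: clp_id)
next
  case False
  have A: "A \<ge> 0" using hb[of 0] abs_ge_zero[of "H 0"] by (metis exp_gt_zero order_trans zero_le_mult_iff not_le mult_pos_pos less_le_not_le)
  have "\<bar>H x - H (clp Rr x)\<bar> \<le> \<bar>H x\<bar> + \<bar>H (clp Rr x)\<bar>" by (rule abs_triangle_ineq4)
  also have "\<dots> \<le> A * exp (c0 * \<bar>x\<bar> / 2) + A * exp (c0 * \<bar>clp Rr x\<bar> / 2)"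
    by (intro add_mono hb)
  also have "\<dots> \<le> A * exp (c0 * \<bar>x\<bar> / 2) + A * exp (c0 * \<bar>x\<bar> / 2)"
    using clp_abs[OF Rr, of x] False c0_pos A by (intro add_mono mult_left_mono) (auto simp: mult_left_mono)
  also have "\<dots> = 2 * A * exp (c0 * \<bar>x\<bar> / 2)" by simp
  also have "exp (c0 * \<bar>x\<bar> / 2) = exp (- c0 * \<bar>x\<bar> / 2) * exp (c0 * \<bar>x\<bar>)"
    by (simp add: exp_add[symmetric])
  also have "exp (- c0 * \<bar>x\<bar> / 2) \<le> exp (- c0 * Rr / 2)" using False c0_pos by simp
  then have "2 * A * (exp (- c0 * \<bar>x\<bar> / 2) * exp (c0 * \<bar>x\<bar>)) \<le> 2 * A * (exp (- c0 * Rr / 2) * exp (c0 * \<bar>x\<bar>))"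
    using A by (intro mult_left_mono mult_right_mono) auto
  finally show ?thesis by (simp add: mult_ac)
qed

lemma trunc_E:
  fixes H :: "real \<Rightarrow> real"
  assumes hc: "continuous_on UNIV H" and hb: "\<And>x. \<bar>H x\<bar> \<le> A * exp (c0 * \<bar>x\<bar> / 2)" and Rr: "Rr \<ge> 0"
    and [measurable]: "f \<in> borel_measurable P" and fi: "integrable P (\<lambda>\<omega>. exp (c0 * \<bar>f \<omega>\<bar>))"
    and fe: "expectation (\<lambda>\<omega>. exp (c0 * \<bar>f \<omega>\<bar>)) \<le> sqrt 2"
  shows "\<bar>expectation (\<lambda>\<omega>. H (f \<omega>)) - expectation (\<lambda>\<omega>. H (clp Rr (f \<omega>)))\<bar> \<le> 2 * A * exp (- c0 * Rr / 2) * sqrt 2"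
proof -
  have A: "A \<ge> 0" using hb[of 0] abs_ge_zero[of "H 0"] by (metis exp_gt_zero order_trans zero_le_mult_iff not_le mult_pos_pos less_le_not_le)
  have hm[measurable]: "H \<in> borel_measurable borel" by (rule borel_measurable_continuous_onI[OF hc])
  have cm[measurable]: "clp Rr \<in> borel_measurable borel" by (rule borel_measurable_continuous_onI[OF clp_cont])
  have i1: "integrable P (\<lambda>\<omega>. H (f \<omega>))" by (rule growth_int[OF hc hb]) (use fi in auto)
  have i2: "integrable P (\<lambda>\<omega>. H (clp Rr (f \<omega>)))"
  proof (rule integrable_bounded[where C="A * exp (c0 * Rr / 2)"])
    fix \<omega>
    show "\<bar>H (clp Rr (f \<omega>))\<bar> \<le> A * exp (c0 * Rr / 2)"
    proof -
      have "exp (c0 * \<bar>clp Rr (f \<omega>)\<bar> / 2) \<le> exp (c0 * Rr / 2)"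
        using clp_abs[OF Rr, of "f \<omega>"] c0_pos by (simp add: mult_left_mono divide_right_mono)
      from mult_left_mono[OF this A] show ?thesis using hb[of "clp Rr (f \<omega>)"] by linarith
    qed
  qed simp
  have "\<bar>expectation (\<lambda>\<omega>. H (f \<omega>)) - expectation (\<lambda>\<omega>. H (clp Rr (f \<omega>)))\<bar>
      = \<bar>expectation (\<lambda>\<omega>. H (f \<omega>) - H (clp Rr (f \<omega>)))\<bar>"
    using i1 i2 by simp
  also have "\<dots> \<le> expectation (\<lambda>\<omega>. \<bar>H (f \<omega>) - H (clp Rr (f \<omega>))\<bar>)"
    by (rule integral_abs_bound[unfolded real_norm_def])
  also have "\<dots> \<le> expectation (\<lambda>\<omega>. 2 * A * exp (- c0 * Rr / 2) * exp (c0 * \<bar>f \<omega>\<bar>))"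
    by (intro integral_mono integrable_abs Bochner_Integration.integrable_diff i1 i2 integrable_mult_right fi
        trunc_diff[OF hb Rr])
  also have "\<dots> = 2 * A * exp (- c0 * Rr / 2) * expectation (\<lambda>\<omega>. exp (c0 * \<bar>f \<omega>\<bar>))" by simp
  also have "\<dots> \<le> 2 * A * exp (- c0 * Rr / 2) * sqrt 2"
    using A fe by (intro mult_left_mono) auto
  finally show ?thesis .
qed

lemma conv_growth:
  fixes H :: "real \<Rightarrow> real"
  assumes hc: "continuous_on UNIV H" and hb: "\<And>x. \<bar>H x\<bar> \<le> A * exp (c0 * \<bar>x\<bar> / 2)"
  shows "(\<lambda>K. expectation (\<lambda>\<omega>. H (S K \<omega>))) \<longlonglongrightarrow> expectation (\<lambda>\<omega>. H (T \<omega>))"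
proof (rule LIMSEQ_I)
  fix e :: real assume e: "e > 0"
  have A: "A \<ge> 0" using hb[of 0] abs_ge_zero[of "H 0"] by (metis exp_gt_zero order_trans zero_le_mult_iff not_le mult_pos_pos less_le_not_le)
  define M0 where "M0 = 6 * A * sqrt 2 / e + 1"
  have M0: "M0 \<ge> 1" using A e by (simp add: M0_def)
  define Rr where "Rr = 2 / c0 * ln M0"
  have Rr: "Rr \<ge> 0" using M0 c0_pos by (simp add: Rr_def)
  have expR: "exp (- c0 * Rr / 2) = 1 / M0"
    using M0 c0_pos by (simp add: Rr_def exp_minus exp_ln inverse_eq_divide)
  have small: "2 * A * exp (- c0 * Rr / 2) * sqrt 2 < e / 3"
  proof -
    have "2 * A * exp (- c0 * Rr / 2) * sqrt 2 = 2 * A * sqrt 2 / M0" unfolding expR by simp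
    also have "\<dots> < e / 3"
    proof -
      have p: "0 \<le> A * (sqrt 2 * 6)" using A by simp
      show ?thesis using M0 e A p by (simp add: divide_less_eq M0_def field_simps) (use p in linarith)
    qed
    finally show ?thesis .
  qed
  have Hc: "continuous_on UNIV (\<lambda>x. H (clp Rr x))"
    by (rule continuous_on_compose2[OF hc clp_cont]) auto
  have Hb: "\<bar>H (clp Rr x)\<bar> \<le> A * exp (c0 * Rr / 2)" for x
  proof -
    have "exp (c0 * \<bar>clp Rr x\<bar> / 2) \<le> exp (c0 * Rr / 2)"
      using clp_abs[OF Rr, of x] c0_pos by (simp add: mult_left_mono divide_right_mono)
    from mult_left_mono[OF this A] show ?thesis using hb[of "clp Rr x"] by linarith
  qed
  obtain N where N: "\<And>K. K \<ge> N \<Longrightarrow> norm (expectation (\<lambda>\<omega>. H (clp Rr (S K \<omega>))) - expectation (\<lambda>\<omega>. H (clp Rr (T \<omega>)))) < e / 3"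
    using LIMSEQ_D[OF conv_bc[OF Hc Hb], of "e/3"] e by auto
  show "\<exists>N. \<forall>K\<ge>N. norm (expectation (\<lambda>\<omega>. H (S K \<omega>)) - expectation (\<lambda>\<omega>. H (T \<omega>))) < e"
  proof (intro exI allI impI)
    fix K assume K: "K \<ge> N"
    have 1: "\<bar>expectation (\<lambda>\<omega>. H (S K \<omega>)) - expectation (\<lambda>\<omega>. H (clp Rr (S K \<omega>)))\<bar> < e / 3"
      using trunc_E[OF hc hb Rr S_meas S_exp_int, of K] small by linarith
    have 3: "\<bar>expectation (\<lambda>\<omega>. H (T \<omega>)) - expectation (\<lambda>\<omega>. H (clp Rr (T \<omega>)))\<bar> < e / 3"
      using trunc_E[OF hc hb Rr T_meas T_exp_int] small by linarith
    show "norm (expectation (\<lambda>\<omega>. H (S K \<omega>)) - expectation (\<lambda>\<omega>. H (T \<omega>))) < e"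
      using 1 3 N[OF K] unfolding real_norm_def by linarith
  qed
qed

end

lemma std_normal_id: "distributed std_normal_measure lborel (\<lambda>w. w) std_normal_density"
  unfolding distributed_def std_normal_measure_def
  by (auto intro!: distr_id2)

context setting
begin

lemma gauss_lin:
  assumes J: "finite J" "J \<subseteq> {1..}"
  shows "distr P borel (\<lambda>\<omega>. \<Sum>v\<in>J. c v * Z v \<omega>) = distr std_normal_measure borel (\<lambda>w. sqrt (\<Sum>v\<in>J. (c v)\<^sup>2) * w)"
proof -
  interpret N: prob_space std_normal_measure by (rule std_normal_measure_prob)
  define J' where "J' = {v\<in>J. c v \<noteq> 0}"
  have J': "finite J'" "J' \<subseteq> {1..}" using J by (auto simp: J'_def)
  have s1: "(\<Sum>v\<in>J. c v * Z v \<omega>) = (\<Sum>v\<in>J'. c v * Z v \<omega>)" for \<omega>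
    unfolding J'_def by (rule sum.mono_neutral_right) (use J in auto)
  have s2: "(\<Sum>v\<in>J. (c v)\<^sup>2) = (\<Sum>v\<in>J'. (c v)\<^sup>2)"
    unfolding J'_def by (rule sum.mono_neutral_right) (use J in auto)
  show ?thesis
  proof (cases "J' = {}")
    case True
    then show ?thesis unfolding s1 s2 by simp
  next
    case False
    have nz: "\<And>v. v \<in> J' \<Longrightarrow> 0 < \<bar>c v\<bar>" by (auto simp: J'_def)
    have dist_v: "distributed P lborel (\<lambda>\<omega>. c v * Z v \<omega>) (normal_density 0 (\<bar>c v\<bar>))" if "v \<in> J'" for v
    proof -
      have "distributed P lborel (\<lambda>\<omega>. 0 + c v * Z v \<omega>) (normal_density (0 + c v * 0) (\<bar>c v\<bar> * 1))"
        using that J' by (intro normal_density_affine normal_Z) (auto simp: J'_def)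
      then show ?thesis by simp
    qed
    have ind: "indep_vars (\<lambda>_. borel) (\<lambda>v \<omega>. c v * Z v \<omega>) J'"
      by (rule indep_vars_compose2[OF indep_vars_subset[OF indep_Z J'(2)]]) simp
    have D1: "distributed P lborel (\<lambda>\<omega>. \<Sum>v\<in>J'. c v * Z v \<omega>) (normal_density (\<Sum>v\<in>J'. 0) (sqrt (\<Sum>v\<in>J'. \<bar>c v\<bar>\<^sup>2)))"
      by (rule sum_indep_normal[OF J'(1) False ind nz dist_v])
    define s where "s = sqrt (\<Sum>v\<in>J'. (c v)\<^sup>2)"
    have spos: "s > 0"
      unfolding s_def using False J'(1) by (intro real_sqrt_gt_zero sum_pos) (auto simp: J'_def)
    have D2: "distributed std_normal_measure lborel (\<lambda>w. 0 + s * w) (normal_density (0 + s * 0) (\<bar>s\<bar> * 1))"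
      using spos by (intro N.normal_density_affine std_normal_id) auto
    have "distr P lborel (\<lambda>\<omega>. \<Sum>v\<in>J'. c v * Z v \<omega>) = distr std_normal_measure lborel (\<lambda>w. s * w)"
      using D1 D2 spos unfolding distributed_def by (simp add: s_def)
    then show ?thesis unfolding s1 s2 s_def[symmetric]
      by (metis (no_types) distr_cong sets_lborel)
  qed
qed

end

context setting
begin

definition "xr I \<omega> = restrict (\<lambda>i. case_sum X Z i \<omega>) (Inl ` I)"
definition "zr J \<omega> = restrict (\<lambda>i. case_sum X Z i \<omega>) (Inr ` J)"
abbreviation "Mx I \<equiv> PiM (Inl ` I) (\<lambda>_. borel :: real measure)"
abbreviation "Mz J \<equiv> PiM (Inr ` J) (\<lambda>_. borel :: real measure)"

lemma case_sum_meas[measurable]: "case_sum X Z i \<in> borel_measurable P"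
  by (cases i) auto

lemma xr_meas[measurable]: "xr I \<in> measurable P (Mx I)"
  unfolding xr_def by measurable

lemma zr_meas[measurable]: "zr J \<in> measurable P (Mz J)"
  unfolding zr_def by measurable

lemma indep_xz:
  assumes "I \<subseteq> {1..}" "J \<subseteq> {1..}"
  shows "indep_var (Mx I) (xr I) (Mz J) (zr J)"
  unfolding xr_def zr_def
  by (rule indep_var_restrict[OF indep]) (use assms in auto)

lemma decouple_nn:
  assumes IJ: "I \<subseteq> {1..}" "J \<subseteq> {1..}"
    and F[measurable]: "F \<in> borel_measurable (Mx I \<Otimes>\<^sub>M Mz J)"
  shows "(\<integral>\<^sup>+\<omega>. F (xr I \<omega>, zr J \<omega>) \<partial>P) = (\<integral>\<^sup>+\<omega>'. (\<integral>\<^sup>+\<omega>. F (xr I \<omega>', zr J \<omega>) \<partial>P) \<partial>P)"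
proof -
  let ?Dx = "distr P (Mx I) (xr I)" and ?Dz = "distr P (Mz J) (zr J)"
  interpret Dx: prob_space ?Dx by (rule prob_space_distr) simp
  interpret Dz: prob_space ?Dz by (rule prob_space_distr) simp
  have eq: "?Dx \<Otimes>\<^sub>M ?Dz = distr P (Mx I \<Otimes>\<^sub>M Mz J) (\<lambda>\<omega>. (xr I \<omega>, zr J \<omega>))"
    using indep_xz[OF IJ] unfolding indep_var_distribution_eq by simp
  have "(\<integral>\<^sup>+\<omega>. F (xr I \<omega>, zr J \<omega>) \<partial>P) = integral\<^sup>N (distr P (Mx I \<Otimes>\<^sub>M Mz J) (\<lambda>\<omega>. (xr I \<omega>, zr J \<omega>))) F"
    by (rule nn_integral_distr[symmetric]) simp_all
  also have "\<dots> = integral\<^sup>N (?Dx \<Otimes>\<^sub>M ?Dz) F" by (simp add: eq)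
  also have "\<dots> = (\<integral>\<^sup>+x. (\<integral>\<^sup>+z. F (x, z) \<partial>?Dz) \<partial>?Dx)"
    by (rule Dz.nn_integral_fst[symmetric]) simp
  also have "\<dots> = (\<integral>\<^sup>+\<omega>'. (\<integral>\<^sup>+z. F (xr I \<omega>', z) \<partial>?Dz) \<partial>P)"
    by (rule nn_integral_distr) (simp_all add: Dz.borel_measurable_nn_integral_fst)
  also have "\<dots> = (\<integral>\<^sup>+\<omega>'. (\<integral>\<^sup>+\<omega>. F (xr I \<omega>', zr J \<omega>) \<partial>P) \<partial>P)"
    by (intro nn_integral_cong nn_integral_distr) simp_all
  finally show ?thesis .
qed

lemma decouple_int:
  fixes F :: "((nat + nat \<Rightarrow> real) \<times> (nat + nat \<Rightarrow> real)) \<Rightarrow> real"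
  assumes IJ: "I \<subseteq> {1..}" "J \<subseteq> {1..}"
    and F[measurable]: "F \<in> borel_measurable (Mx I \<Otimes>\<^sub>M Mz J)"
    and int: "integrable P (\<lambda>\<omega>. F (xr I \<omega>, zr J \<omega>))"
  shows "expectation (\<lambda>\<omega>. F (xr I \<omega>, zr J \<omega>)) = (\<integral>\<omega>'. (\<integral>\<omega>. F (xr I \<omega>', zr J \<omega>) \<partial>P) \<partial>P)"
proof -
  let ?Dx = "distr P (Mx I) (xr I)" and ?Dz = "distr P (Mz J) (zr J)"
  interpret Dx: prob_space ?Dx by (rule prob_space_distr) simp
  interpret Dz: prob_space ?Dz by (rule prob_space_distr) simp
  interpret D: pair_prob_space ?Dx ?Dz ..
  have eq: "?Dx \<Otimes>\<^sub>M ?Dz = distr P (Mx I \<Otimes>\<^sub>M Mz J) (\<lambda>\<omega>. (xr I \<omega>, zr J \<omega>))"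
    using indep_xz[OF IJ] unfolding indep_var_distribution_eq by simp
  have intD: "integrable (?Dx \<Otimes>\<^sub>M ?Dz) F"
    unfolding eq by (subst integrable_distr_eq) (simp_all add: int)
  have "expectation (\<lambda>\<omega>. F (xr I \<omega>, zr J \<omega>)) = integral\<^sup>L (distr P (Mx I \<Otimes>\<^sub>M Mz J) (\<lambda>\<omega>. (xr I \<omega>, zr J \<omega>))) F"
    by (rule integral_distr[symmetric]) simp_all
  also have "\<dots> = integral\<^sup>L (?Dx \<Otimes>\<^sub>M ?Dz) F" by (simp add: eq)
  also have "\<dots> = (\<integral>x. (\<integral>z. F (x, z) \<partial>?Dz) \<partial>?Dx)"
    by (rule D.integral_fst'[symmetric, OF intD])
  also have "\<dots> = (\<integral>\<omega>'. (\<integral>z. F (xr I \<omega>', z) \<partial>?Dz) \<partial>P)"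
    by (rule integral_distr) simp_all
  also have "\<dots> = (\<integral>\<omega>'. (\<integral>\<omega>. F (xr I \<omega>', zr J \<omega>) \<partial>P) \<partial>P)"
    by (intro Bochner_Integration.integral_cong refl integral_distr) simp_all
  finally show ?thesis .
qed

end

definition "Hn f s = (\<integral>\<^sup>+w. f (sqrt s * w) \<partial>std_normal_measure)"
definition "Hf f s = (\<integral>w. f (sqrt s * w) \<partial>std_normal_measure)"

context setting
begin

definition "lo n K2 = nat \<lfloor>K2 * sqrt (En n)\<rfloor> + 1"
definition "Kn K1 = nat \<lfloor>K1\<rfloor>"
definition "phi n K v x = (\<Sum>u\<in>{1..K}. yf (x (Inl u)) * a n u v) / sqrt (En n)"
definition "FU n K l xz = (\<Sum>v\<in>{l..n}. phi n K v (fst xz) * snd xz (Inr v))"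

lemma U13_eq: "U13 P X Z G M n K1 K2 \<omega> = FU n (Kn K1) (lo n K2) (xr {1..Kn K1} \<omega>, zr {lo n K2..n} \<omega>)"
proof -
  have "U13 P X Z G M n K1 K2 \<omega> = (\<Sum>u\<in>{1..Kn K1}. \<Sum>v\<in>{lo n K2..n}. Y u \<omega> * a n u v * Z v \<omega>) / sqrt (En n)"
    by (simp add: U13_def Y_def a_def En_def lo_def Kn_def)
  also have "\<dots> = (\<Sum>v\<in>{lo n K2..n}. \<Sum>u\<in>{1..Kn K1}. Y u \<omega> * a n u v * Z v \<omega>) / sqrt (En n)"
    by (subst sum.swap) (rule refl)
  also have "\<dots> = (\<Sum>v\<in>{lo n K2..n}. Lf n (Kn K1) v \<omega> * Z v \<omega>) / sqrt (En n)"
    by (simp add: Lf_def sum_distrib_right)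
  also have "\<dots> = FU n (Kn K1) (lo n K2) (xr {1..Kn K1} \<omega>, zr {lo n K2..n} \<omega>)"
    unfolding FU_def phi_def xr_def zr_def Lf_def
    by (simp add: sum_divide_distrib[symmetric] Y_eq lo_def)
  finally show ?thesis .
qed

lemma phi_meas: "(\<lambda>x. phi n K v x) \<in> borel_measurable (Mx {1..K})"
  unfolding phi_def
proof (intro borel_measurable_divide borel_measurable_sum borel_measurable_times measurable_const)
  fix u assume "u \<in> {1..K}"
  then have "(\<lambda>x. x (Inl u)) \<in> measurable (Mx {1..K}) borel"
    by (intro measurable_component_singleton) auto
  then show "(\<lambda>x. yf (x (Inl u))) \<in> borel_measurable (Mx {1..K})" by measurable
qed auto

lemma FU_meas: "FU n K l \<in> borel_measurable (Mx {1..K} \<Otimes>\<^sub>M Mz {l..n})"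
  unfolding FU_def
proof (intro borel_measurable_sum borel_measurable_times)
  fix v assume v: "v \<in> {l..n}"
  show "(\<lambda>xz. phi n K v (fst xz)) \<in> borel_measurable (Mx {1..K} \<Otimes>\<^sub>M Mz {l..n})"
    by (rule measurable_compose[OF measurable_fst phi_meas])
  have "(\<lambda>z. z (Inr v)) \<in> measurable (Mz {l..n}) borel"
    using v by (intro measurable_component_singleton) auto
  then show "(\<lambda>xz. snd xz (Inr v)) \<in> borel_measurable (Mx {1..K} \<Otimes>\<^sub>M Mz {l..n})"
    by (rule measurable_compose[OF measurable_snd])
qed

lemma phi_xr: "phi n K v (xr {1..K} \<omega>) = Lf n K v \<omega> / sqrt (En n)"
  by (simp add: phi_def xr_def Lf_def Y_eq)

lemma sum_phi_sq: "(\<Sum>v\<in>{l..n}. (phi n K v (xr {1..K} \<omega>))\<^sup>2) = Vg n K l \<omega>"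
proof -
  have e: "(sqrt (En n))\<^sup>2 = En n" by (simp add: En_nonneg)
  have "(phi n K v (xr {1..K} \<omega>))\<^sup>2 = (Lf n K v \<omega>)\<^sup>2 / En n" for v
    unfolding phi_xr power_divide e ..
  then show ?thesis by (simp add: Vg_def sum_divide_distrib)
qed

lemma inner_eq:
  assumes l: "l \<ge> 1"
  shows "distr P borel (\<lambda>\<omega>. FU n K l (x, zr {l..n} \<omega>)) = distr std_normal_measure borel (\<lambda>w. sqrt (\<Sum>v\<in>{l..n}. (phi n K v x)\<^sup>2) * w)"
proof -
  have "(\<lambda>\<omega>. FU n K l (x, zr {l..n} \<omega>)) = (\<lambda>\<omega>. \<Sum>v\<in>{l..n}. phi n K v x * Z v \<omega>)"
    by (intro ext) (simp add: FU_def zr_def)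
  then show ?thesis using gauss_lin[of "{l..n}" "\<lambda>v. phi n K v x"] l by auto
qed

lemma mix_nn:
  assumes f[measurable]: "f \<in> borel_measurable borel"
  shows "(\<integral>\<^sup>+\<omega>. f (U13 P X Z G M n K1 K2 \<omega>) \<partial>P) = (\<integral>\<^sup>+\<omega>. Hn f (Vg n (Kn K1) (lo n K2) \<omega>) \<partial>P)"
proof -
  let ?K = "Kn K1" and ?l = "lo n K2"
  have l: "?l \<ge> 1" by (simp add: lo_def)
  have FUm[measurable]: "FU n ?K ?l \<in> borel_measurable (Mx {1..?K} \<Otimes>\<^sub>M Mz {?l..n})" by (rule FU_meas)
  have "(\<integral>\<^sup>+\<omega>. f (U13 P X Z G M n K1 K2 \<omega>) \<partial>P) = (\<integral>\<^sup>+\<omega>. f (FU n ?K ?l (xr {1..?K} \<omega>, zr {?l..n} \<omega>)) \<partial>P)"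
    by (simp add: U13_eq)
  also have "\<dots> = (\<integral>\<^sup>+\<omega>'. (\<integral>\<^sup>+\<omega>. f (FU n ?K ?l (xr {1..?K} \<omega>', zr {?l..n} \<omega>)) \<partial>P) \<partial>P)"
    by (rule decouple_nn[OF _ _ measurable_compose[OF FUm f]]) (use l in auto)
  also have "\<dots> = (\<integral>\<^sup>+\<omega>'. Hn f (Vg n ?K ?l \<omega>') \<partial>P)"
  proof (intro nn_integral_cong)
    fix \<omega>'
    let ?x = "xr {1..?K} \<omega>'"
    have xs: "?x \<in> space (Mx {1..?K})" by (simp add: xr_def space_PiM)
    have mz: "(\<lambda>\<omega>. FU n ?K ?l (?x, zr {?l..n} \<omega>)) \<in> borel_measurable P"
      by (rule measurable_compose[OF measurable_Pair[OF measurable_const[OF xs] zr_meas] FUm])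
    have "(\<integral>\<^sup>+\<omega>. f (FU n ?K ?l (?x, zr {?l..n} \<omega>)) \<partial>P) = integral\<^sup>N (distr P borel (\<lambda>\<omega>. FU n ?K ?l (?x, zr {?l..n} \<omega>))) f"
      by (rule nn_integral_distr[symmetric]) (use mz in auto)
    also have "\<dots> = integral\<^sup>N (distr std_normal_measure borel (\<lambda>w. sqrt (\<Sum>v\<in>{?l..n}. (phi n ?K v ?x)\<^sup>2) * w)) f"
      by (simp add: inner_eq[OF l])
    also have "\<dots> = (\<integral>\<^sup>+w. f (sqrt (\<Sum>v\<in>{?l..n}. (phi n ?K v ?x)\<^sup>2) * w) \<partial>std_normal_measure)"
      by (rule nn_integral_distr) simp_all
    also have "\<dots> = Hn f (Vg n ?K ?l \<omega>')" unfolding Hn_def sum_phi_sq ..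
    finally show "(\<integral>\<^sup>+\<omega>. f (FU n ?K ?l (?x, zr {?l..n} \<omega>)) \<partial>P) = Hn f (Vg n ?K ?l \<omega>')" .
  qed
  finally show ?thesis .
qed

lemma mix_int:
  fixes f :: "real \<Rightarrow> real"
  assumes f[measurable]: "f \<in> borel_measurable borel"
    and int: "integrable P (\<lambda>\<omega>. f (U13 P X Z G M n K1 K2 \<omega>))"
  shows "expectation (\<lambda>\<omega>. f (U13 P X Z G M n K1 K2 \<omega>)) = expectation (\<lambda>\<omega>. Hf f (Vg n (Kn K1) (lo n K2) \<omega>))"
proof -
  let ?K = "Kn K1" and ?l = "lo n K2"
  have l: "?l \<ge> 1" by (simp add: lo_def)
  have FUm[measurable]: "FU n ?K ?l \<in> borel_measurable (Mx {1..?K} \<Otimes>\<^sub>M Mz {?l..n})" by (rule FU_meas)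
  have "expectation (\<lambda>\<omega>. f (U13 P X Z G M n K1 K2 \<omega>)) = expectation (\<lambda>\<omega>. f (FU n ?K ?l (xr {1..?K} \<omega>, zr {?l..n} \<omega>)))"
    by (simp add: U13_eq)
  also have "\<dots> = (\<integral>\<omega>'. (\<integral>\<omega>. f (FU n ?K ?l (xr {1..?K} \<omega>', zr {?l..n} \<omega>)) \<partial>P) \<partial>P)"
    by (rule decouple_int[OF _ _ measurable_compose[OF FUm f]]) (use l int in \<open>auto simp: U13_eq\<close>)
  also have "\<dots> = (\<integral>\<omega>'. Hf f (Vg n ?K ?l \<omega>') \<partial>P)"
  proof (intro Bochner_Integration.integral_cong refl)
    fix \<omega>'
    let ?x = "xr {1..?K} \<omega>'"
    have xs: "?x \<in> space (Mx {1..?K})" by (simp add: xr_def space_PiM)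
    have mz: "(\<lambda>\<omega>. FU n ?K ?l (?x, zr {?l..n} \<omega>)) \<in> borel_measurable P"
      by (rule measurable_compose[OF measurable_Pair[OF measurable_const[OF xs] zr_meas] FUm])
    have "(\<integral>\<omega>. f (FU n ?K ?l (?x, zr {?l..n} \<omega>)) \<partial>P) = integral\<^sup>L (distr P borel (\<lambda>\<omega>. FU n ?K ?l (?x, zr {?l..n} \<omega>))) f"
      by (rule integral_distr[symmetric]) (use mz in auto)
    also have "\<dots> = integral\<^sup>L (distr std_normal_measure borel (\<lambda>w. sqrt (\<Sum>v\<in>{?l..n}. (phi n ?K v ?x)\<^sup>2) * w)) f"
      by (simp add: inner_eq[OF l])
    also have "\<dots> = (\<integral>w. f (sqrt (\<Sum>v\<in>{?l..n}. (phi n ?K v ?x)\<^sup>2) * w) \<partial>std_normal_measure)"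
      by (rule integral_distr) simp_all
    also have "\<dots> = Hf f (Vg n ?K ?l \<omega>')" unfolding Hf_def sum_phi_sq ..
    finally show "(\<integral>\<omega>. f (FU n ?K ?l (?x, zr {?l..n} \<omega>)) \<partial>P) = Hf f (Vg n ?K ?l \<omega>')" .
  qed
  finally show ?thesis .
qed

end

lemma pow_le_exp:
  fixes y :: real assumes "0 \<le> y"
  shows "y ^ k \<le> fact k * exp y"
proof -
  have s: "(\<lambda>n. y ^ n / fact n) sums exp y"
    using exp_converges[of y] by (simp add: divide_inverse scaleR_conv_of_real mult.commute)
  have "sum (\<lambda>n. y ^ n / fact n) {k} \<le> (\<Sum>n. y ^ n / fact n)"
    by (rule sum_le_suminf) (use s assms in \<open>auto simp: sums_iff\<close>)
  then have "y ^ k / fact k \<le> exp y" using s by (simp add: sums_iff)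
  then show ?thesis by (simp add: divide_le_eq mult.commute)
qed

lemma Hf_bc_cont:
  fixes f :: "real \<Rightarrow> real"
  assumes fc: "continuous_on UNIV f" and fb: "\<And>x. \<bar>f x\<bar> \<le> C"
  shows "continuous_on UNIV (Hf f)"
proof -
  interpret N: prob_space std_normal_measure by (rule std_normal_measure_prob)
  have fm[measurable]: "f \<in> borel_measurable borel" by (rule borel_measurable_continuous_onI[OF fc])
  have "continuous (at s) (Hf f)" for s
  proof (rule continuous_at_sequentiallyI)
    fix u assume u: "u \<longlonglongrightarrow> s"
    show "(\<lambda>n. Hf f (u n)) \<longlonglongrightarrow> Hf f s"
      unfolding Hf_def
    proof (rule integral_dominated_convergence[where w="\<lambda>_. C"])
      show "AE w in std_normal_measure. (\<lambda>n. f (sqrt (u n) * w)) \<longlonglongrightarrow> f (sqrt s * w)"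
        by (intro always_eventually allI continuous_on_tendsto_compose[OF fc] tendsto_mult
            tendsto_real_sqrt u tendsto_const) auto
    qed (use fb in auto)
  qed
  then show ?thesis by (simp add: continuous_on_eq_continuous_at)
qed

lemma Hf_bc_bound:
  fixes f :: "real \<Rightarrow> real"
  assumes fm[measurable]: "f \<in> borel_measurable borel" and fb: "\<And>x. \<bar>f x\<bar> \<le> C"
  shows "\<bar>Hf f s\<bar> \<le> C"
proof -
  interpret N: prob_space std_normal_measure by (rule std_normal_measure_prob)
  have "\<bar>Hf f s\<bar> \<le> (\<integral>w. \<bar>f (sqrt s * w)\<bar> \<partial>std_normal_measure)"
    unfolding Hf_def by (rule integral_abs_bound[unfolded real_norm_def])
  also have "\<dots> \<le> (\<integral>w. C \<partial>std_normal_measure)"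
    by (rule integral_mono) (use fb in \<open>auto intro!: N.integrable_const_bound[where B=C]\<close>)
  finally show ?thesis using N.prob_space by simp
qed

definition "mk k = (\<integral>w. w ^ k \<partial>std_normal_measure)"

lemma std_normal_pow_int: "integrable std_normal_measure (\<lambda>w. w ^ k)"
  unfolding std_normal_measure_def
  by (subst integrable_density) (auto simp: integrable_std_normal_moment)

lemma Hf_pow: "Hf (\<lambda>x. x ^ k) s = sqrt s ^ k * mk k"
  unfolding Hf_def mk_def by (simp add: power_mult_distrib)

lemma Hf_pow_cont: "continuous_on UNIV (Hf (\<lambda>x. x ^ k))"
  unfolding Hf_pow by (intro continuous_intros)

lemma sqrt_pow_bound:
  assumes c: "c > 0"
  shows "\<bar>sqrt s ^ k\<bar> \<le> ((2 / c) ^ k * fact k * exp (c / 2)) * exp (c * \<bar>s\<bar> / 2)"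
proof -
  define t where "t = sqrt \<bar>s\<bar>"
  have t0: "t \<ge> 0" and t2: "t\<^sup>2 = \<bar>s\<bar>" by (auto simp: t_def)
  have "\<bar>sqrt s\<bar> = sqrt \<bar>s\<bar>" by (cases "s \<ge> 0") (auto simp: real_sqrt_minus)
  then have ab: "\<bar>sqrt s ^ k\<bar> = t ^ k" by (simp add: t_def power_abs)
  have tt: "t \<le> 1 + t\<^sup>2"
  proof -
    have "0 \<le> (t - 1/2)\<^sup>2" by simp
    then show ?thesis by (simp add: power2_eq_square algebra_simps)
  qed
  have p1: "t ^ k \<le> (1 + t\<^sup>2) ^ k" by (rule power_mono[OF tt t0])
  have e1: "(2 / c) * (c * (1 + t\<^sup>2) / 2) = 1 + t\<^sup>2" using c by simp
  have p2: "(1 + t\<^sup>2) ^ k = (2 / c) ^ k * (c * (1 + t\<^sup>2) / 2) ^ k"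
    by (metis e1 power_mult_distrib)
  have p3: "(c * (1 + t\<^sup>2) / 2) ^ k \<le> fact k * exp (c * (1 + t\<^sup>2) / 2)"
    by (rule pow_le_exp) (use c t0 in simp)
  have e2: "c * (1 + t\<^sup>2) / 2 = c / 2 + c * \<bar>s\<bar> / 2" by (simp add: t2 distrib_left add_divide_distrib)
  have p4: "exp (c * (1 + t\<^sup>2) / 2) = exp (c / 2) * exp (c * \<bar>s\<bar> / 2)"
    unfolding e2 by (rule exp_add)
  have p5: "(2 / c) ^ k * (c * (1 + t\<^sup>2) / 2) ^ k \<le> (2 / c) ^ k * (fact k * exp (c * (1 + t\<^sup>2) / 2))"
    by (rule mult_left_mono[OF p3]) (use c in simp)
  have "t ^ k \<le> (2 / c) ^ k * (fact k * (exp (c / 2) * exp (c * \<bar>s\<bar> / 2)))"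
    using p1 p5 unfolding p2 p4 by (rule order_trans)
  then show ?thesis unfolding ab by (simp add: mult_ac)
qed

lemma Hf_pow_bound:
  assumes c: "c > 0"
  shows "\<bar>Hf (\<lambda>x. x ^ k) s\<bar> \<le> (\<bar>mk k\<bar> * ((2 / c) ^ k * fact k * exp (c / 2))) * exp (c * \<bar>s\<bar> / 2)"
proof -
  have "\<bar>Hf (\<lambda>x. x ^ k) s\<bar> = \<bar>mk k\<bar> * \<bar>sqrt s ^ k\<bar>" by (simp add: Hf_pow abs_mult)
  also have "\<dots> \<le> \<bar>mk k\<bar> * (((2 / c) ^ k * fact k * exp (c / 2)) * exp (c * \<bar>s\<bar> / 2))"
    by (intro mult_left_mono sqrt_pow_bound c) simp
  finally show ?thesis by (simp add: mult_ac)
qed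

lemma final_lim:
  fixes F :: "nat \<Rightarrow> real \<Rightarrow> real \<Rightarrow> real" and g :: "nat \<Rightarrow> real"
  assumes lim: "\<And>K1 K2. (\<lambda>n. F n K1 K2) \<longlonglongrightarrow> g (nat \<lfloor>K1\<rfloor>)" and g: "g \<longlonglongrightarrow> L"
  shows "((\<lambda>(K1, K2). limsup (\<lambda>n. ereal \<bar>F n K1 K2 - L\<bar>)) \<longlongrightarrow> 0) (at_top \<times>\<^sub>F at_top)"
proof -
  have eq: "(\<lambda>(K1, K2). limsup (\<lambda>n. ereal \<bar>F n K1 K2 - L\<bar>)) = (\<lambda>p. ereal \<bar>g (nat \<lfloor>fst p\<rfloor>) - L\<bar>)"
  proof (intro ext, clarsimp)
    fix K1 K2
    have "(\<lambda>n. ereal \<bar>F n K1 K2 - L\<bar>) \<longlonglongrightarrow> ereal \<bar>g (nat \<lfloor>K1\<rfloor>) - L\<bar>"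
      by (intro tendsto_ereal tendsto_rabs tendsto_diff lim tendsto_const)
    then show "limsup (\<lambda>n. ereal \<bar>F n K1 K2 - L\<bar>) = ereal \<bar>g (nat \<lfloor>K1\<rfloor>) - L\<bar>"
      by (rule lim_imp_Limsup[OF trivial_limit_sequentially])
  qed
  have nf: "filterlim (\<lambda>x::real. nat \<lfloor>x\<rfloor>) sequentially at_top"
    unfolding filterlim_at_top
  proof
    fix Z :: nat
    show "\<forall>\<^sub>F x in at_top. Z \<le> nat \<lfloor>x::real\<rfloor>"
      using eventually_ge_at_top[of "real Z"] by eventually_elim (simp add: le_nat_floor)
  qed
  have nf2: "filterlim (\<lambda>p::real \<times> real. nat \<lfloor>fst p\<rfloor>) sequentially (at_top \<times>\<^sub>F at_top)"
    by (rule filterlim_compose[OF nf filterlim_fst])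
  have g': "((\<lambda>K. ereal \<bar>g K - L\<bar>) \<longlongrightarrow> 0) sequentially"
  proof -
    have "((\<lambda>K. ereal \<bar>g K - L\<bar>) \<longlongrightarrow> ereal \<bar>L - L\<bar>) sequentially"
      by (intro tendsto_ereal tendsto_rabs tendsto_diff g tendsto_const)
    then show ?thesis by (simp add: zero_ereal_def)
  qed
  show ?thesis unfolding eq
    using filterlim_compose[OF g' nf2] by (simp add: comp_def)
qed




context setting
begin

abbreviation "NMT \<equiv> normal_mixture P T"

lemma NM_meas[measurable]: "(\<lambda>(\<omega>, w). sqrt (T \<omega>) * w) \<in> borel_measurable (P \<Otimes>\<^sub>M std_normal_measure)"
  by measurable

lemma nm_nn:
  assumes f[measurable]: "f \<in> borel_measurable borel"
  shows "(\<integral>\<^sup>+x. f x \<partial>NMT) = (\<integral>\<^sup>+\<omega>. Hn f (T \<omega>) \<partial>P)"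
proof -
  interpret N: prob_space std_normal_measure by (rule std_normal_measure_prob)
  have "(\<integral>\<^sup>+x. f x \<partial>NMT) = (\<integral>\<^sup>+p. f (case p of (\<omega>, w) \<Rightarrow> sqrt (T \<omega>) * w) \<partial>(P \<Otimes>\<^sub>M std_normal_measure))"
    unfolding normal_mixture_def by (rule nn_integral_distr) simp_all
  also have "\<dots> = (\<integral>\<^sup>+\<omega>. (\<integral>\<^sup>+w. f (sqrt (T \<omega>) * w) \<partial>std_normal_measure) \<partial>P)"
    using N.nn_integral_fst[of "\<lambda>p. f (case p of (\<omega>, w) \<Rightarrow> sqrt (T \<omega>) * w)" P] by simp
  finally show ?thesis by (simp add: Hn_def)
qed

lemma nm_int:
  fixes f :: "real \<Rightarrow> real"
  assumes f[measurable]: "f \<in> borel_measurable borel" and int: "integrable NMT f"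
  shows "(\<integral>x. f x \<partial>NMT) = expectation (\<lambda>\<omega>. Hf f (T \<omega>))"
proof -
  interpret N: prob_space std_normal_measure by (rule std_normal_measure_prob)
  interpret PN: pair_prob_space P std_normal_measure ..
  have int2: "integrable (P \<Otimes>\<^sub>M std_normal_measure) (\<lambda>p. f (case p of (\<omega>, w) \<Rightarrow> sqrt (T \<omega>) * w))"
    using int unfolding normal_mixture_def by (subst (asm) integrable_distr_eq) simp_all
  have "(\<integral>x. f x \<partial>NMT) = (\<integral>p. f (case p of (\<omega>, w) \<Rightarrow> sqrt (T \<omega>) * w) \<partial>(P \<Otimes>\<^sub>M std_normal_measure))"
    unfolding normal_mixture_def by (rule integral_distr) simp_all
  also have "\<dots> = (\<integral>\<omega>. (\<integral>w. f (sqrt (T \<omega>) * w) \<partial>std_normal_measure) \<partial>P)"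
    using PN.integral_fst'[OF int2] by simp
  finally show ?thesis by (simp add: Hf_def)
qed

lemma nm_prob: "prob_space NMT"
proof -
  interpret N: prob_space std_normal_measure by (rule std_normal_measure_prob)
  interpret PN: pair_prob_space P std_normal_measure ..
  show ?thesis unfolding normal_mixture_def by (rule prob_space.prob_space_distr) (simp_all add: PN.prob_space_axioms)
qed

lemma n_limit:
  fixes H :: "real \<Rightarrow> real"
  assumes hc: "continuous_on UNIV H" and hb: "\<And>x. \<bar>H x\<bar> \<le> A * exp (c0 * \<bar>x\<bar> / 2)"
  shows "(\<lambda>n. expectation (\<lambda>\<omega>. H (Vg n K (lo n K2) \<omega>))) \<longlonglongrightarrow> expectation (\<lambda>\<omega>. H (S K \<omega>))"
proof (rule integral_dominated_convergence[where w="\<lambda>_. A * exp (c0 * (2 * K * B\<^sup>2) / 2)"])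
  have hm[measurable]: "H \<in> borel_measurable borel" by (rule borel_measurable_continuous_onI[OF hc])
  show "(\<lambda>\<omega>. H (S K \<omega>)) \<in> borel_measurable P" by simp
  show "(\<lambda>\<omega>. H (Vg n K (lo n K2) \<omega>)) \<in> borel_measurable P" for n by simp
  have lo: "real (lo n K2) \<le> max K2 0 * sqrt (En n) + 1" for n
  proof -
    have "real (nat \<lfloor>K2 * sqrt (En n)\<rfloor>) \<le> max K2 0 * sqrt (En n)"
    proof (cases "K2 * sqrt (En n) \<ge> 0")
      case True
      then have "real (nat \<lfloor>K2 * sqrt (En n)\<rfloor>) \<le> K2 * sqrt (En n)" by (rule of_nat_floor)
      also have "\<dots> \<le> max K2 0 * sqrt (En n)" by (intro mult_right_mono) (auto simp: En_nonneg)
      finally show ?thesis .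
    next
      case False then show ?thesis by (simp add: En_nonneg)
    qed
    then show ?thesis by (simp add: lo_def)
  qed
  show "AE \<omega> in P. (\<lambda>n. H (Vg n K (lo n K2) \<omega>)) \<longlonglongrightarrow> H (S K \<omega>)"
    by (intro always_eventually allI continuous_on_tendsto_compose[OF hc] Vg_lim[OF lo]) auto
  show "AE \<omega> in P. norm (H (Vg n K (lo n K2) \<omega>)) \<le> A * exp (c0 * (2 * K * B\<^sup>2) / 2)" for n
  proof (intro always_eventually allI)
    fix \<omega>
    have A: "A \<ge> 0" using hb[of 0] abs_ge_zero[of "H 0"] by (metis exp_gt_zero order_trans zero_le_mult_iff not_le mult_pos_pos less_le_not_le)
    have "exp (c0 * \<bar>Vg n K (lo n K2) \<omega>\<bar> / 2) \<le> exp (c0 * (2 * K * B\<^sup>2) / 2)"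
      using Vg_bound[of n K "lo n K2" \<omega>] Vg_nonneg[of n K "lo n K2" \<omega>] c0_pos
      by (simp add: mult_left_mono divide_right_mono)
    from mult_left_mono[OF this A] hb[of "Vg n K (lo n K2) \<omega>"]
    show "norm (H (Vg n K (lo n K2) \<omega>)) \<le> A * exp (c0 * (2 * K * B\<^sup>2) / 2)" by simp
  qed
qed simp

end

lemma std_normal_abs_int: "integrable std_normal_measure (\<lambda>w. \<bar>w\<bar> ^ k)"
  unfolding std_normal_measure_def
  by (subst integrable_density) (auto simp: integrable_std_normal_moment_abs)

definition "Mk k = (\<integral>w. \<bar>w\<bar> ^ k \<partial>std_normal_measure)"

lemma nn_abs_moment: "(\<integral>\<^sup>+w. ennreal (\<bar>w\<bar> ^ k) \<partial>std_normal_measure) = ennreal (Mk k)"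
  unfolding Mk_def by (rule nn_integral_eq_integral) (auto intro: std_normal_abs_int)

lemma Hn_abs_pow: "Hn (\<lambda>x. ennreal (\<bar>x\<bar> ^ k)) s = ennreal (\<bar>sqrt s\<bar> ^ k) * ennreal (Mk k)"
proof -
  have "Hn (\<lambda>x. ennreal (\<bar>x\<bar> ^ k)) s = (\<integral>\<^sup>+w. ennreal (\<bar>sqrt s\<bar> ^ k) * ennreal (\<bar>w\<bar> ^ k) \<partial>std_normal_measure)"
    unfolding Hn_def by (intro nn_integral_cong) (simp add: abs_mult power_mult_distrib ennreal_mult)
  also have "\<dots> = ennreal (\<bar>sqrt s\<bar> ^ k) * ennreal (Mk k)"
    by (simp add: nn_integral_cmult nn_abs_moment)
  finally show ?thesis .
qed

lemma sq_sqrt_abs: "(sqrt s)\<^sup>2 = \<bar>s\<bar>"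
proof (cases "s \<ge> 0")
  case False
  then have "sqrt s = - sqrt (- s)" by (simp add: real_sqrt_minus)
  then show ?thesis using False by simp
qed simp

lemma Hn_exp: "Hn (\<lambda>x. ennreal (exp (t * x))) s = ennreal (exp (t\<^sup>2 * \<bar>s\<bar> / 2))"
proof -
  have "Hn (\<lambda>x. ennreal (exp (t * x))) s = (\<integral>\<^sup>+w. ennreal (exp ((t * sqrt s) * w)) \<partial>std_normal_measure)"
    unfolding Hn_def by (simp add: mult_ac)
  also have "\<dots> = ennreal (exp ((t * sqrt s)\<^sup>2 / 2))" by (rule gauss_mgf)
  finally show ?thesis by (simp add: power_mult_distrib sq_sqrt_abs)
qed

context setting
begin

lemma U13_meas[measurable]: "(\<lambda>\<omega>. U13 P X Z G M n K1 K2 \<omega>) \<in> borel_measurable P"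
  unfolding U13_def XM_def by measurable

lemma bc_result:
  fixes f :: "real \<Rightarrow> real"
  assumes fc: "continuous_on UNIV f" and fb: "\<And>x. \<bar>f x\<bar> \<le> C"
  shows "((\<lambda>(K1, K2). limsup (\<lambda>n. ereal \<bar>expectation (\<lambda>\<omega>. f (U13 P X Z G M n K1 K2 \<omega>)) - (\<integral>x. f x \<partial>NMT)\<bar>)) \<longlongrightarrow> 0) (at_top \<times>\<^sub>F at_top)"
proof (rule final_lim)
  have fm[measurable]: "f \<in> borel_measurable borel" by (rule borel_measurable_continuous_onI[OF fc])
  have C: "C \<ge> 0" using fb[of 0] by linarith
  have hb: "\<bar>Hf f x\<bar> \<le> C * exp (c0 * \<bar>x\<bar> / 2)" for x
  proof -
    have "C \<le> C * exp (c0 * \<bar>x\<bar> / 2)" using C c0_pos by (simp add: mult_le_cancel_left1)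
    then show ?thesis using Hf_bc_bound[OF fm fb, of x] by linarith
  qed
  have hc: "continuous_on UNIV (Hf f)" by (rule Hf_bc_cont[OF fc fb])
  show "(\<lambda>n. expectation (\<lambda>\<omega>. f (U13 P X Z G M n K1 K2 \<omega>))) \<longlonglongrightarrow> expectation (\<lambda>\<omega>. Hf f (S (nat \<lfloor>K1\<rfloor>) \<omega>))" for K1 K2
  proof -
    have "expectation (\<lambda>\<omega>. f (U13 P X Z G M n K1 K2 \<omega>)) = expectation (\<lambda>\<omega>. Hf f (Vg n (Kn K1) (lo n K2) \<omega>))" for n
      by (rule mix_int[OF fm]) (rule integrable_bounded[where C=C], simp_all add: fb)
    then show ?thesis using n_limit[OF hc hb, of "Kn K1" K2] by (simp add: Kn_def)
  qed
  have L: "(\<integral>x. f x \<partial>NMT) = expectation (\<lambda>\<omega>. Hf f (T \<omega>))"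
  proof (rule nm_int[OF fm])
    interpret NM: prob_space NMT by (rule nm_prob)
    show "integrable NMT f" by (rule NM.integrable_const_bound[where B=C]) (simp_all add: fb normal_mixture_def)
  qed
  show "(\<lambda>K. expectation (\<lambda>\<omega>. Hf f (S K \<omega>))) \<longlonglongrightarrow> (\<integral>x. f x \<partial>NMT)"
    unfolding L by (rule conv_growth[OF hc hb])
qed

end

context setting
begin

lemma U_pow_int: "integrable P (\<lambda>\<omega>. (U13 P X Z G M n K1 K2 \<omega>) ^ k)"
proof (rule integrableI_bounded)
  let ?K = "Kn K1" and ?l = "lo n K2"
  have "(\<integral>\<^sup>+\<omega>. ennreal (norm ((U13 P X Z G M n K1 K2 \<omega>) ^ k)) \<partial>P) = (\<integral>\<^sup>+\<omega>. ennreal (\<bar>U13 P X Z G M n K1 K2 \<omega>\<bar> ^ k) \<partial>P)"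
    by (simp add: power_abs)
  also have "\<dots> = (\<integral>\<^sup>+\<omega>. Hn (\<lambda>x. ennreal (\<bar>x\<bar> ^ k)) (Vg n ?K ?l \<omega>) \<partial>P)"
    by (rule mix_nn) simp
  also have "\<dots> \<le> (\<integral>\<^sup>+\<omega>. ennreal (sqrt (2 * ?K * B\<^sup>2) ^ k) * ennreal (Mk k) \<partial>P)"
  proof (intro nn_integral_mono)
    fix \<omega>
    have "\<bar>sqrt (Vg n ?K ?l \<omega>)\<bar> ^ k \<le> sqrt (2 * ?K * B\<^sup>2) ^ k"
      using Vg_nonneg[of n ?K ?l \<omega>] Vg_bound[of n ?K ?l \<omega>] by (intro power_mono) auto
    then show "Hn (\<lambda>x. ennreal (\<bar>x\<bar> ^ k)) (Vg n ?K ?l \<omega>) \<le> ennreal (sqrt (2 * ?K * B\<^sup>2) ^ k) * ennreal (Mk k)"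
      unfolding Hn_abs_pow by (intro mult_right_mono ennreal_leI) auto
  qed
  also have "\<dots> < \<infinity>" by (simp add: emeasure_space_1 ennreal_mult_less_top)
  finally show "(\<integral>\<^sup>+\<omega>. ennreal (norm ((U13 P X Z G M n K1 K2 \<omega>) ^ k)) \<partial>P) < \<infinity>" .
qed simp

definition "Ak k = (2 / c0) ^ k * fact k * exp (c0 / 2)"

lemma NMT_pow_int: "integrable NMT (\<lambda>x. x ^ k)"
proof (rule integrableI_bounded)
  have "(\<integral>\<^sup>+x. ennreal (norm (x ^ k)) \<partial>NMT) = (\<integral>\<^sup>+x. ennreal (\<bar>x\<bar> ^ k) \<partial>NMT)"
    by (simp add: power_abs)
  also have "\<dots> = (\<integral>\<^sup>+\<omega>. Hn (\<lambda>x. ennreal (\<bar>x\<bar> ^ k)) (T \<omega>) \<partial>P)"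
    by (rule nm_nn) simp
  also have "\<dots> \<le> (\<integral>\<^sup>+\<omega>. ennreal (Ak k * Mk k) * ennreal (exp (c0 * \<bar>T \<omega>\<bar>)) \<partial>P)"
  proof (intro nn_integral_mono)
    fix \<omega>
    have "\<bar>sqrt (T \<omega>) ^ k\<bar> \<le> Ak k * exp (c0 * \<bar>T \<omega>\<bar> / 2)"
      unfolding Ak_def by (rule sqrt_pow_bound[OF c0_pos])
    also have "\<dots> \<le> Ak k * exp (c0 * \<bar>T \<omega>\<bar>)"
      using c0_pos by (intro mult_left_mono) (auto simp: Ak_def)
    finally have b: "\<bar>sqrt (T \<omega>)\<bar> ^ k \<le> Ak k * exp (c0 * \<bar>T \<omega>\<bar>)" by (simp add: power_abs)
    have M: "Mk k \<ge> 0" unfolding Mk_def by simp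
    have "\<bar>sqrt (T \<omega>)\<bar> ^ k * Mk k \<le> Ak k * exp (c0 * \<bar>T \<omega>\<bar>) * Mk k"
      by (rule mult_right_mono[OF b M])
    have A0: "Ak k \<ge> 0" using c0_pos by (simp add: Ak_def)
    have "ennreal (Ak k * Mk k) * ennreal (exp (c0 * \<bar>T \<omega>\<bar>)) = ennreal (Ak k * exp (c0 * \<bar>T \<omega>\<bar>) * Mk k)"
      using A0 M by (simp add: ennreal_mult[symmetric] mult_ac)
    moreover have "Hn (\<lambda>x. ennreal (\<bar>x\<bar> ^ k)) (T \<omega>) = ennreal (\<bar>sqrt (T \<omega>)\<bar> ^ k * Mk k)"
      unfolding Hn_abs_pow by (simp add: ennreal_mult[symmetric] M)
    ultimately show "Hn (\<lambda>x. ennreal (\<bar>x\<bar> ^ k)) (T \<omega>) \<le> ennreal (Ak k * Mk k) * ennreal (exp (c0 * \<bar>T \<omega>\<bar>))"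
      using \<open>\<bar>sqrt (T \<omega>)\<bar> ^ k * Mk k \<le> _\<close> by (simp add: ennreal_leI)
  qed
  also have "\<dots> = ennreal (Ak k * Mk k) * (\<integral>\<^sup>+\<omega>. ennreal (exp (c0 * \<bar>T \<omega>\<bar>)) \<partial>P)"
    by (rule nn_integral_cmult) simp
  also have "\<dots> < \<infinity>"
  proof -
    have "(\<integral>\<^sup>+\<omega>. ennreal (exp (c0 * \<bar>T \<omega>\<bar>)) \<partial>P) < \<infinity>"
      using T_exp_int(1) unfolding integrable_iff_bounded by simp
    then show ?thesis by (simp add: ennreal_mult_less_top)
  qed
  finally show "(\<integral>\<^sup>+x. ennreal (norm (x ^ k)) \<partial>NMT) < \<infinity>" .
qed (simp add: normal_mixture_def)

lemma pow_result:
  "((\<lambda>(K1, K2). limsup (\<lambda>n. ereal \<bar>expectation (\<lambda>\<omega>. (U13 P X Z G M n K1 K2 \<omega>) ^ k) - (\<integral>x. x ^ k \<partial>NMT)\<bar>)) \<longlongrightarrow> 0) (at_top \<times>\<^sub>F at_top)"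
proof (rule final_lim)
  have fm[measurable]: "(\<lambda>x::real. x ^ k) \<in> borel_measurable borel" by simp
  have hb: "\<bar>Hf (\<lambda>x. x ^ k) x\<bar> \<le> (\<bar>mk k\<bar> * ((2 / c0) ^ k * fact k * exp (c0 / 2))) * exp (c0 * \<bar>x\<bar> / 2)" for x
    by (rule Hf_pow_bound[OF c0_pos])
  have hc: "continuous_on UNIV (Hf (\<lambda>x. x ^ k))" by (rule Hf_pow_cont)
  show "(\<lambda>n. expectation (\<lambda>\<omega>. (U13 P X Z G M n K1 K2 \<omega>) ^ k)) \<longlonglongrightarrow> expectation (\<lambda>\<omega>. Hf (\<lambda>x. x ^ k) (S (nat \<lfloor>K1\<rfloor>) \<omega>))" for K1 K2
  proof -
    have "expectation (\<lambda>\<omega>. (U13 P X Z G M n K1 K2 \<omega>) ^ k) = expectation (\<lambda>\<omega>. Hf (\<lambda>x. x ^ k) (Vg n (Kn K1) (lo n K2) \<omega>))" for n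
      by (rule mix_int[OF fm U_pow_int])
    then show ?thesis using n_limit[OF hc hb, of "Kn K1" K2] by (simp add: Kn_def)
  qed
  have L: "(\<integral>x. x ^ k \<partial>NMT) = expectation (\<lambda>\<omega>. Hf (\<lambda>x. x ^ k) (T \<omega>))"
    by (rule nm_int[OF fm NMT_pow_int])
  show "(\<lambda>K. expectation (\<lambda>\<omega>. Hf (\<lambda>x. x ^ k) (S K \<omega>))) \<longlonglongrightarrow> (\<integral>x. x ^ k \<partial>NMT)"
    unfolding L by (rule conv_growth[OF hc hb])
qed

lemma mgf_result: "\<exists>\<delta>>0. \<forall>t\<in>{-\<delta><..<\<delta>}. integrable NMT (\<lambda>x. exp (t * x))"
proof (intro exI[of _ "sqrt c0"] conjI ballI)
  show "sqrt c0 > 0" using c0_pos by simp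
  fix t assume t: "t \<in> {- sqrt c0<..<sqrt c0}"
  then have "\<bar>t\<bar> < sqrt c0" by auto
  then have "t\<^sup>2 < c0" using c0_pos by (metis abs_ge_zero power2_abs real_sqrt_abs real_sqrt_less_iff)
  then have t2: "t\<^sup>2 \<le> c0" by simp
  show "integrable NMT (\<lambda>x. exp (t * x))"
  proof (rule integrableI_bounded)
    have "(\<integral>\<^sup>+x. ennreal (norm (exp (t * x))) \<partial>NMT) = (\<integral>\<^sup>+x. ennreal (exp (t * x)) \<partial>NMT)" by simp
    also have "\<dots> = (\<integral>\<^sup>+\<omega>. Hn (\<lambda>x. ennreal (exp (t * x))) (T \<omega>) \<partial>P)"
      by (rule nm_nn) simp
    also have "\<dots> \<le> (\<integral>\<^sup>+\<omega>. ennreal (exp (c0 * \<bar>T \<omega>\<bar>)) \<partial>P)"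
    proof (intro nn_integral_mono)
      fix \<omega>
      have "t\<^sup>2 * \<bar>T \<omega>\<bar> \<le> (2 * c0) * \<bar>T \<omega>\<bar>"
        using t2 c0_pos by (intro mult_right_mono) auto
      then have "t\<^sup>2 * \<bar>T \<omega>\<bar> / 2 \<le> c0 * \<bar>T \<omega>\<bar>" by simp
      then show "Hn (\<lambda>x. ennreal (exp (t * x))) (T \<omega>) \<le> ennreal (exp (c0 * \<bar>T \<omega>\<bar>))"
        unfolding Hn_exp by (intro ennreal_leI) simp
    qed
    also have "\<dots> < \<infinity>" using T_exp_int(1) unfolding integrable_iff_bounded by simp
    finally show "(\<integral>\<^sup>+x. ennreal (norm (exp (t * x))) \<partial>NMT) < \<infinity>" .
  qed (simp add: normal_mixture_def)
qed

end

theorem proposition3p14: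
  fixes P :: "'a measure"
    and X Z :: "nat \<Rightarrow> 'a \<Rightarrow> real"
    and G :: "nat \<Rightarrow> nat \<Rightarrow> nat \<Rightarrow> bool"
    and \<sigma> :: "nat \<Rightarrow> nat \<Rightarrow> real"
    and M :: real
  assumes P: "prob_space P"
    and meas_X: "\<And>i. X i \<in> borel_measurable P"
    and meas_Z: "\<And>i. Z i \<in> borel_measurable P"
    and indep: "prob_space.indep_vars P (\<lambda>_. borel) (case_sum X Z) ({1..} <+> {1..})"
    and ident: "\<And>i. 1 \<le> i \<Longrightarrow> distr P borel (X i) = distr P borel (X 1)"
    and int_X: "integrable P (X 1)"
    and mean_X: "prob_space.expectation P (X 1) = 0"
    and int_X2: "integrable P (\<lambda>\<omega>. (X 1 \<omega>)\<^sup>2)"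
    and var_X: "prob_space.variance P (X 1) = 1"
    and normal_Z: "\<And>i. 1 \<le> i \<Longrightarrow> distributed P lborel (Z i) std_normal_density"
    and graphs: "\<And>n. in_graph_class n (G n)"
    and edges: "filterlim (\<lambda>n. real (num_edges n (G n))) at_top sequentially"
    and codeg: "codegree_condition G \<sigma>"
    and bM: "trunc_var P (X 1) M > 0"
  shows "\<exists>T. T \<in> borel_measurable P \<and> L1_quad_limit P X \<sigma> M T \<and> (AE \<omega> in P. 0 \<le> T \<omega>) \<and>
      (\<forall>f :: real \<Rightarrow> real. continuous_on UNIV f \<and> bounded (range f) \<longrightarrow>
         ((\<lambda>(K1, K2). limsup (\<lambda>n. ereal \<bar>prob_space.expectation P (\<lambda>\<omega>. f (U13 P X Z G M n K1 K2 \<omega>))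
                                  - (\<integral>x. f x \<partial>normal_mixture P T)\<bar>)) \<longlongrightarrow> 0) (at_top \<times>\<^sub>F at_top)) \<and>
      (\<forall>k :: nat.
         (\<forall>n K1 K2. integrable P (\<lambda>\<omega>. (U13 P X Z G M n K1 K2 \<omega>) ^ k)) \<and>
         integrable (normal_mixture P T) (\<lambda>x. x ^ k) \<and>
         ((\<lambda>(K1, K2). limsup (\<lambda>n. ereal \<bar>prob_space.expectation P (\<lambda>\<omega>. (U13 P X Z G M n K1 K2 \<omega>) ^ k)
                                  - (\<integral>x. x ^ k \<partial>normal_mixture P T)\<bar>)) \<longlongrightarrow> 0) (at_top \<times>\<^sub>F at_top)) \<and>
      (\<exists>\<delta>>0. \<forall>t\<in>{-\<delta><..<\<delta>}. integrable (normal_mixture P T) (\<lambda>x. exp (t * x)))"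
proof -
  interpret setting P X Z G \<sigma> M
    by (rule setting.intro[OF P meas_X meas_Z indep ident normal_Z graphs edges codeg bM])
  have A: "\<forall>f :: real \<Rightarrow> real. continuous_on UNIV f \<and> bounded (range f) \<longrightarrow>
         ((\<lambda>(K1, K2). limsup (\<lambda>n. ereal \<bar>prob_space.expectation P (\<lambda>\<omega>. f (U13 P X Z G M n K1 K2 \<omega>))
                                  - (\<integral>x. f x \<partial>normal_mixture P T)\<bar>)) \<longlongrightarrow> 0) (at_top \<times>\<^sub>F at_top)"
  proof (intro allI impI)
    fix f :: "real \<Rightarrow> real"
    assume f: "continuous_on UNIV f \<and> bounded (range f)"
    then obtain C where C: "\<And>x. \<bar>f x\<bar> \<le> C" unfolding bounded_iff by auto
    show "((\<lambda>(K1, K2). limsup (\<lambda>n. ereal \<bar>expectation (\<lambda>\<omega>. f (U13 P X Z G M n K1 K2 \<omega>)) - (\<integral>x. f x \<partial>normal_mixture P T)\<bar>)) \<longlongrightarrow> 0) (at_top \<times>\<^sub>F at_top)"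
      by (rule bc_result[OF conjunct1[OF f] C])
  qed
  have B: "\<forall>k :: nat.
         (\<forall>n K1 K2. integrable P (\<lambda>\<omega>. (U13 P X Z G M n K1 K2 \<omega>) ^ k)) \<and>
         integrable (normal_mixture P T) (\<lambda>x. x ^ k) \<and>
         ((\<lambda>(K1, K2). limsup (\<lambda>n. ereal \<bar>prob_space.expectation P (\<lambda>\<omega>. (U13 P X Z G M n K1 K2 \<omega>) ^ k)
                                  - (\<integral>x. x ^ k \<partial>normal_mixture P T)\<bar>)) \<longlongrightarrow> 0) (at_top \<times>\<^sub>F at_top)"
    using U_pow_int NMT_pow_int pow_result by blast
  have C: "\<exists>\<delta>>0. \<forall>t\<in>{-\<delta><..<\<delta>}. integrable (normal_mixture P T) (\<lambda>x. exp (t * x))"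
    by (rule mgf_result)
  show ?thesis
    by (rule exI[of _ T]) (use T_meas L1_quad T_nonneg A B C in blast)
qed


end
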